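(* Let $m,n\ge 1$, let $0\le\theta\le 1$, let $0<p<1$, let $\lambda>0$, and let $\mathbf{Y}\in\mathbb{R}^{m\times n}$ have full singular value decomposition $\mathbf{Y}=\mathbf{U}\mathbf{\Sigma}\mathbf{V}^\mathsf{T}$ with $\mathbf{\Sigma}=\mathrm{diag}(\sigma_1,\sigma_2,\ldots,\sigma_{\min\{m,n\}})$, $\sigma_1\ge\sigma_2\ge\cdots\ge\sigma_{\min\{m,n\}}\ge 0$. Put $r=\lceil\theta\cdot\min\{m,n\}\rceil$. Then the optimal solution of $$\min_{\mathbf{M}\in\mathbb{R}^{m\times n}}\ \lambda\Vert\mathbf{M}\Vert_{\theta,S_p}^p+\frac{1}{2}\Vert\mathbf{M}-\mathbf{Y}\Vert_F^2$$ is given by $\mathbf{M}_{opt}=\mathbf{U}\mathbf{\Delta}\mathbf{V}^\mathsf{T}$, where $\mathbf{\Delta}=\mathrm{diag}(\sigma_1,\ldots,\sigma_r,\delta_{r+1},\ldots,\delta_{\min\{m,n\}})$ is arranged in the same (non-ascending) order as $\mathbf{\Sigma}$, and the diagonal entries $\delta_i$ ($i>r$) are given by the problem $$\min_{\delta_i\ge 0}\ \sum_{i=r+1}^{\min\{m,n\}}\Big(\lambda\delta_i^p+\tfrac{1}{2}(\delta_i-\sigma_i)^2\Big)\quad\text{s.t. } \delta_i\ge\delta_j \text{ for } i\le j,\ i,j\in\{r+1,\ldots,\min\{m,n\}\}.$$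
   Context: For a matrix $\mathbf{M}\in\mathbb{R}^{m\times n}$ with singular values $\sigma_1(\mathbf{M})\ge\cdots\ge\sigma_{\min\{m,n\}}(\mathbf{M})\ge0$, a truncation rate $\theta\in[0,1]$ and $r=\lceil\theta\cdot\min\{m,n\}\rceil$ (smallest integer not less than $\theta\min\{m,n\}$), the $p$-th power of the truncated Schatten $p$-norm is $\Vert\mathbf{M}\Vert_{\theta,S_p}^p=\sum_{i=r+1}^{\min\{m,n\}}\sigma_i(\mathbf{M})^p$, i.e. only the smallest $\min\{m,n\}-r$ singular values contribute. $\Vert\cdot\Vert_F$ is the Frobenius norm. *)

theory Defs
  imports "Jordan_Normal_Form.Matrix" Complex_Main
begin

text \<open>Matrices are Jordan_Normal_Form matrices; rows/columns and diagonal
  positions are indexed from 0, so the paper's index i corresponds to i - 1 here.\<close>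

definition orthogonal_mat :: "nat \<Rightarrow> real mat \<Rightarrow> bool" where
  "orthogonal_mat k U \<longleftrightarrow> U \<in> carrier_mat k k \<and> U * transpose_mat U = 1\<^sub>m k"

definition rdiag :: "nat \<Rightarrow> nat \<Rightarrow> (nat \<Rightarrow> real) \<Rightarrow> real mat" where
  "rdiag m n d = mat m n (\<lambda>(i, j). if i = j then d i else 0)"

definition is_svd :: "nat \<Rightarrow> nat \<Rightarrow> real mat \<Rightarrow> real mat \<Rightarrow> (nat \<Rightarrow> real) \<Rightarrow> real mat \<Rightarrow> bool" where
  "is_svd m n Y U s V \<longleftrightarrow>
     Y \<in> carrier_mat m n \<and> orthogonal_mat m U \<and> orthogonal_mat n V \<and>
     (\<forall>i < min m n. 0 \<le> s i) \<and>
     (\<forall>i j. i \<le> j \<and> j < min m n \<longrightarrow> s j \<le> s i) \<and>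
     Y = U * rdiag m n s * transpose_mat V"

definition sing_vals :: "real mat \<Rightarrow> nat \<Rightarrow> real" where
  "sing_vals M = (SOME s. (\<forall>i \<ge> min (dim_row M) (dim_col M). s i = 0) \<and>
                     (\<exists>U V. is_svd (dim_row M) (dim_col M) M U s V))"

definition trunc_rank :: "real \<Rightarrow> nat \<Rightarrow> nat \<Rightarrow> nat" where
  "trunc_rank \<theta> m n = nat \<lceil>\<theta> * real (min m n)\<rceil>"

definition trunc_schatten_pow :: "real \<Rightarrow> real \<Rightarrow> real mat \<Rightarrow> real" where
  "trunc_schatten_pow \<theta> p M =
     (let k = min (dim_row M) (dim_col M); r = trunc_rank \<theta> (dim_row M) (dim_col M)
      in \<Sum>i\<in>{r..<k}. sing_vals M i powr p)"

definition frob_norm :: "real mat \<Rightarrow> real" where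
  "frob_norm M = sqrt (\<Sum>i<dim_row M. \<Sum>j<dim_col M. (M $$ (i, j))\<^sup>2)"

end

theory Submission
  imports Defs "Jordan_Normal_Form.Determinant" "HOL-Analysis.Function_Topology"
begin

lemma swap4g:
  fixes f :: "nat \<Rightarrow> nat \<Rightarrow> nat \<Rightarrow> nat \<Rightarrow> real"
  shows "(\<Sum>i\<in>A. \<Sum>j\<in>B. \<Sum>k\<in>C. \<Sum>l\<in>D. f i j k l) = (\<Sum>k\<in>C. \<Sum>l\<in>D. \<Sum>i\<in>A. \<Sum>j\<in>B. f i j k l)"
proof -
  have "(\<Sum>i\<in>A. \<Sum>j\<in>B. \<Sum>k\<in>C. \<Sum>l\<in>D. f i j k l) = (\<Sum>i\<in>A. \<Sum>k\<in>C. \<Sum>j\<in>B. \<Sum>l\<in>D. f i j k l)"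
    by (rule sum.cong[OF refl], rule sum.swap)
  also have "\<dots> = (\<Sum>k\<in>C. \<Sum>i\<in>A. \<Sum>j\<in>B. \<Sum>l\<in>D. f i j k l)" by (rule sum.swap)
  also have "\<dots> = (\<Sum>k\<in>C. \<Sum>i\<in>A. \<Sum>l\<in>D. \<Sum>j\<in>B. f i j k l)"
    by (rule sum.cong[OF refl], rule sum.cong[OF refl], rule sum.swap)
  also have "\<dots> = (\<Sum>k\<in>C. \<Sum>l\<in>D. \<Sum>i\<in>A. \<Sum>j\<in>B. f i j k l)"
    by (rule sum.cong[OF refl], rule sum.swap)
  finally show ?thesis .
qed

lemma mult_entry:
  assumes "A \<in> carrier_mat a b" "B \<in> carrier_mat b c" "i < a" "j < c"
  shows "(A * B) $$ (i, j) = (\<Sum>l<b. A $$ (i, l) * B $$ (l, j))"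
  using assms by (auto simp: scalar_prod_def atLeast0LessThan intro!: sum.cong)

lemma orth_carrier: "orthogonal_mat k U \<Longrightarrow> U \<in> carrier_mat k k"
  by (simp add: orthogonal_mat_def)

lemma orth_TU: "orthogonal_mat k U \<Longrightarrow> transpose_mat U * U = 1\<^sub>m k"
  unfolding orthogonal_mat_def
  by (rule mat_mult_left_right_inverse[of U k]) auto

lemma orth_transpose: "orthogonal_mat k U \<Longrightarrow> orthogonal_mat k (transpose_mat U)"
  using orth_TU[of k U] by (simp add: orthogonal_mat_def)

lemma orth_mult:
  assumes "orthogonal_mat k U" "orthogonal_mat k H"
  shows "orthogonal_mat k (U * H)"
proof -
  have U: "U \<in> carrier_mat k k" and H: "H \<in> carrier_mat k k"
    using assms by (auto simp: orthogonal_mat_def)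
  have "(U * H) * transpose_mat (U * H) = U * (H * transpose_mat H) * transpose_mat U"
    using U H by (simp add: transpose_mult[OF U H] assoc_mult_mat[of _ k k _ k _ k])
  also have "\<dots> = 1\<^sub>m k" using assms U by (simp add: orthogonal_mat_def)
  finally show ?thesis using U H by (simp add: orthogonal_mat_def)
qed

lemma orth_rows:
  assumes "orthogonal_mat k U" "i < k" "j < k"
  shows "(\<Sum>l<k. U $$ (i, l) * U $$ (j, l)) = (if i = j then 1 else 0)"
proof -
  have U: "U \<in> carrier_mat k k" using assms by (simp add: orthogonal_mat_def)
  have "(U * transpose_mat U) $$ (i, j) = (\<Sum>l<k. U $$ (i, l) * transpose_mat U $$ (l, j))"
    by (rule mult_entry) (use U assms in auto)
  also have "\<dots> = (\<Sum>l<k. U $$ (i, l) * U $$ (j, l))"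
    using U assms by (auto intro!: sum.cong)
  finally show ?thesis using assms by (simp add: orthogonal_mat_def)
qed

lemma orth_cols:
  assumes "orthogonal_mat k U" "i < k" "j < k"
  shows "(\<Sum>l<k. U $$ (l, i) * U $$ (l, j)) = (if i = j then 1 else 0)"
  using orth_rows[OF orth_transpose[OF assms(1)] assms(2,3)] orth_carrier[OF assms(1)] assms(2,3)
  by (simp add: carrier_matD)

lemma rdiag_cong: "(\<And>i. i < min m n \<Longrightarrow> a i = b i) \<Longrightarrow> rdiag m n a = rdiag m n b"
  unfolding rdiag_def by (intro eq_matI) auto

lemma rdiag_carrier[simp]: "rdiag m n a \<in> carrier_mat m n"
  by (simp add: rdiag_def)

lemma svd_entry:
  assumes U: "U \<in> carrier_mat m m" and V: "V \<in> carrier_mat n n" and i: "i < m" and j: "j < n"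
  shows "(U * rdiag m n a * transpose_mat V) $$ (i, j) = (\<Sum>k<min m n. U $$ (i, k) * a k * V $$ (j, k))"
proof -
  have UR: "(U * rdiag m n a) $$ (i, l) = (if l < m then U $$ (i, l) * a l else 0)" if l: "l < n" for l
  proof -
    have "(U * rdiag m n a) $$ (i, l) = (\<Sum>k<m. U $$ (i, k) * rdiag m n a $$ (k, l))"
      by (rule mult_entry[OF U rdiag_carrier i l])
    also have "\<dots> = (\<Sum>k<m. if k = l then U $$ (i, l) * a l else 0)"
      using l by (intro sum.cong) (auto simp: rdiag_def)
    also have "\<dots> = (if l < m then U $$ (i, l) * a l else 0)"
      by (simp add: sum.delta')
    finally show ?thesis .
  qed
  have "(U * rdiag m n a * transpose_mat V) $$ (i, j)
      = (\<Sum>l<n. (U * rdiag m n a) $$ (i, l) * transpose_mat V $$ (l, j))"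
    by (rule mult_entry) (use U V i j in auto)
  also have "\<dots> = (\<Sum>l<n. if l < m then U $$ (i, l) * a l * V $$ (j, l) else 0)"
    using V j by (intro sum.cong) (auto simp: UR)
  also have "\<dots> = (\<Sum>l\<in>{l\<in>{..<n}. l < m}. U $$ (i, l) * a l * V $$ (j, l))"
    by (rule sum.inter_filter[symmetric]) simp
  also have "{l\<in>{..<n}. l < m} = {..<min m n}" by auto
  finally show ?thesis .
qed

definition fip :: "real mat \<Rightarrow> real mat \<Rightarrow> real" where
  "fip A B = (\<Sum>i<dim_row A. \<Sum>j<dim_col A. A $$ (i, j) * B $$ (i, j))"

lemma frob_sq: "(frob_norm M)\<^sup>2 = fip M M"
  unfolding frob_norm_def fip_def
  by (subst real_sqrt_pow2) (auto intro!: sum_nonneg simp: power2_eq_square)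

lemma fip_comm: "A \<in> carrier_mat m n \<Longrightarrow> B \<in> carrier_mat m n \<Longrightarrow> fip A B = fip B A"
  unfolding fip_def by (auto simp: mult.commute)

lemma fip_minus:
  assumes "A \<in> carrier_mat m n" "B \<in> carrier_mat m n"
  shows "fip (A - B) (A - B) = fip A A - 2 * fip A B + fip B B"
proof -
  have "fip (A - B) (A - B) = (\<Sum>i<m. \<Sum>j<n. A $$ (i, j) * A $$ (i, j) - 2 * (A $$ (i, j) * B $$ (i, j)) + B $$ (i, j) * B $$ (i, j))"
    unfolding fip_def using assms by (auto intro!: sum.cong simp: algebra_simps)
  also have "\<dots> = fip A A - 2 * fip A B + fip B B"
    unfolding fip_def using assms by (simp add: sum.distrib sum_subtractf sum_distrib_left)
  finally show ?thesis .
qed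

lemma prod_sums: "(c::real) * (\<Sum>i\<in>A. f i) * (\<Sum>j\<in>B. g j) = (\<Sum>i\<in>A. \<Sum>j\<in>B. c * f i * g j)"
  by (simp add: sum_distrib_left[symmetric] sum_distrib_right[symmetric] mult.assoc)

lemma fip_svd:
  assumes U1: "U1 \<in> carrier_mat m m" and V1: "V1 \<in> carrier_mat n n"
    and U2: "U2 \<in> carrier_mat m m" and V2: "V2 \<in> carrier_mat n n"
  shows "fip (U1 * rdiag m n a * transpose_mat V1) (U2 * rdiag m n b * transpose_mat V2)
    = (\<Sum>k<min m n. \<Sum>l<min m n. a k * b l * (\<Sum>i<m. U1 $$ (i, k) * U2 $$ (i, l)) * (\<Sum>j<n. V1 $$ (j, k) * V2 $$ (j, l)))"
proof -
  let ?K = "{..<min m n}"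
  have "fip (U1 * rdiag m n a * transpose_mat V1) (U2 * rdiag m n b * transpose_mat V2)
      = (\<Sum>i<m. \<Sum>j<n. (\<Sum>k\<in>?K. U1 $$ (i, k) * a k * V1 $$ (j, k)) * (\<Sum>l\<in>?K. U2 $$ (i, l) * b l * V2 $$ (j, l)))"
  proof -
    have "dim_row (U1 * rdiag m n a * transpose_mat V1) = m" "dim_col (U1 * rdiag m n a * transpose_mat V1) = n"
      using U1 V1 by auto
    then have "fip (U1 * rdiag m n a * transpose_mat V1) (U2 * rdiag m n b * transpose_mat V2)
      = (\<Sum>i<m. \<Sum>j<n. (U1 * rdiag m n a * transpose_mat V1) $$ (i, j) * (U2 * rdiag m n b * transpose_mat V2) $$ (i, j))"
      unfolding fip_def by simp
    also have "\<dots> = (\<Sum>i<m. \<Sum>j<n. (\<Sum>k\<in>?K. U1 $$ (i, k) * a k * V1 $$ (j, k)) * (\<Sum>l\<in>?K. U2 $$ (i, l) * b l * V2 $$ (j, l)))"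
      by (intro sum.cong refl) (simp only: lessThan_iff svd_entry[OF U1 V1] svd_entry[OF U2 V2])
    finally show ?thesis .
  qed
  also have "\<dots> = (\<Sum>i<m. \<Sum>j<n. \<Sum>k\<in>?K. \<Sum>l\<in>?K. a k * b l * (U1 $$ (i, k) * U2 $$ (i, l)) * (V1 $$ (j, k) * V2 $$ (j, l)))"
    by (intro sum.cong refl) (simp add: sum_product mult_ac)
  also have "\<dots> = (\<Sum>k\<in>?K. \<Sum>l\<in>?K. \<Sum>i<m. \<Sum>j<n. a k * b l * (U1 $$ (i, k) * U2 $$ (i, l)) * (V1 $$ (j, k) * V2 $$ (j, l)))"
    by (rule swap4g)
  also have "\<dots> = (\<Sum>k\<in>?K. \<Sum>l\<in>?K. a k * b l * (\<Sum>i<m. U1 $$ (i, k) * U2 $$ (i, l)) * (\<Sum>j<n. V1 $$ (j, k) * V2 $$ (j, l)))"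
    by (intro sum.cong refl) (rule prod_sums[symmetric])
  finally show ?thesis .
qed

lemma telescope_ind:
  fixes a :: "nat \<Rightarrow> real" and K :: nat
  defines "D \<equiv> \<lambda>t. a t - (if Suc t < K then a (Suc t) else 0)"
  shows "k < K \<Longrightarrow> a k = (\<Sum>t<K. if k \<le> t then D t else 0)"
proof (induction "K - k" arbitrary: k)
  case 0 then show ?case by simp
next
  case (Suc x)
  show ?case
  proof (cases "Suc k < K")
    case True
    have IH: "a (Suc k) = (\<Sum>t<K. if Suc k \<le> t then D t else 0)"
      using Suc True by simp
    have "(\<Sum>t<K. if k \<le> t then D t else 0) = (\<Sum>t<K. (if Suc k \<le> t then D t else 0) + (if t = k then D t else 0))"
      by (rule sum.cong) auto
    also have "\<dots> = a (Suc k) + D k" using IH Suc.prems by (simp add: sum.distrib)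
    finally show ?thesis using True by (simp add: D_def)
  next
    case False
    then have "K = Suc k" using Suc.prems by simp
    have "(\<Sum>t<K. if k \<le> t then D t else 0) = (\<Sum>t<K. if t = k then D t else 0)"
      by (rule sum.cong) (auto simp: \<open>K = Suc k\<close>)
    also have "\<dots> = D k" using Suc.prems by simp
    finally show ?thesis by (simp add: D_def \<open>K = Suc k\<close>)
  qed
qed

lemma swap4:
  fixes f :: "nat \<Rightarrow> nat \<Rightarrow> nat \<Rightarrow> nat \<Rightarrow> real"
  shows "(\<Sum>k<K. \<Sum>l<K. \<Sum>t<K. \<Sum>s<K. f k l t s) = (\<Sum>t<K. \<Sum>s<K. \<Sum>k<K. \<Sum>l<K. f k l t s)"
proof -
  have "(\<Sum>k<K. \<Sum>l<K. \<Sum>t<K. \<Sum>s<K. f k l t s) = (\<Sum>k<K. \<Sum>t<K. \<Sum>l<K. \<Sum>s<K. f k l t s)"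
    by (rule sum.cong[OF refl], rule sum.swap)
  also have "\<dots> = (\<Sum>t<K. \<Sum>k<K. \<Sum>l<K. \<Sum>s<K. f k l t s)" by (rule sum.swap)
  also have "\<dots> = (\<Sum>t<K. \<Sum>k<K. \<Sum>s<K. \<Sum>l<K. f k l t s)"
    by (rule sum.cong[OF refl], rule sum.cong[OF refl], rule sum.swap)
  also have "\<dots> = (\<Sum>t<K. \<Sum>s<K. \<Sum>k<K. \<Sum>l<K. f k l t s)"
    by (rule sum.cong[OF refl], rule sum.swap)
  finally show ?thesis .
qed

lemma rearr:
  fixes a b :: "nat \<Rightarrow> real" and W :: "nat \<Rightarrow> nat \<Rightarrow> real"
  assumes a0: "\<forall>k<K. 0 \<le> a k" and b0: "\<forall>k<K. 0 \<le> b k"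
    and am: "\<forall>i j. i \<le> j \<and> j < K \<longrightarrow> a j \<le> a i"
    and bm: "\<forall>i j. i \<le> j \<and> j < K \<longrightarrow> b j \<le> b i"
    and W0: "\<forall>k<K. \<forall>l<K. 0 \<le> W k l"
    and Wr: "\<forall>k<K. (\<Sum>l<K. W k l) \<le> 1"
    and Wc: "\<forall>l<K. (\<Sum>k<K. W k l) \<le> 1"
  shows "(\<Sum>k<K. \<Sum>l<K. a k * b l * W k l) \<le> (\<Sum>k<K. a k * b k)"
proof -
  define D where "D \<equiv> \<lambda>t. a t - (if Suc t < K then a (Suc t) else 0)"
  define E where "E \<equiv> \<lambda>t. b t - (if Suc t < K then b (Suc t) else 0)"
  have D0: "t < K \<Longrightarrow> 0 \<le> D t" for t using a0 am by (auto simp: D_def)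
  have E0: "t < K \<Longrightarrow> 0 \<le> E t" for t using b0 bm by (auto simp: E_def)
  have aD: "k < K \<Longrightarrow> a k = (\<Sum>t<K. if k \<le> t then D t else 0)" for k
    unfolding D_def by (rule telescope_ind)
  have bE: "k < K \<Longrightarrow> b k = (\<Sum>t<K. if k \<le> t then E t else 0)" for k
    unfolding E_def by (rule telescope_ind)
  define I where "I \<equiv> \<lambda>k t::nat. if k \<le> t then 1 else (0::real)"
  have aD': "k < K \<Longrightarrow> a k = (\<Sum>t<K. D t * I k t)" for k
    using aD[of k] by (simp add: I_def if_distrib cong: if_cong)
  have bE': "k < K \<Longrightarrow> b k = (\<Sum>t<K. E t * I k t)" for k
    using bE[of k] by (simp add: I_def if_distrib cong: if_cong)
  have I0: "0 \<le> I k t" for k t by (simp add: I_def)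
  have "(\<Sum>k<K. \<Sum>l<K. a k * b l * W k l)
      = (\<Sum>k<K. \<Sum>l<K. \<Sum>t<K. \<Sum>s<K. D t * E s * (I k t * I l s * W k l))"
  proof (intro sum.cong refl)
    fix k l assume k: "k \<in> {..<K}" and l: "l \<in> {..<K}"
    have "a k * b l * W k l = (\<Sum>t<K. D t * I k t) * (\<Sum>s<K. E s * I l s) * W k l"
      using aD'[of k] bE'[of l] k l by simp
    also have "\<dots> = (\<Sum>t<K. \<Sum>s<K. D t * I k t * (E s * I l s) * W k l)"
      by (subst sum_product) (simp add: sum_distrib_right)
    finally show "a k * b l * W k l = (\<Sum>t<K. \<Sum>s<K. D t * E s * (I k t * I l s * W k l))"
      by (simp add: mult_ac)
  qed
  also have "\<dots> = (\<Sum>t<K. \<Sum>s<K. D t * E s * (\<Sum>k<K. \<Sum>l<K. I k t * I l s * W k l))"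
    by (subst swap4) (simp add: sum_distrib_left)
  also have "\<dots> \<le> (\<Sum>t<K. \<Sum>s<K. D t * E s * (\<Sum>k<K. I k t * I k s))"
  proof (intro sum_mono, rule mult_left_mono)
    fix t s assume t: "t \<in> {..<K}" and s: "s \<in> {..<K}"
    show "0 \<le> D t * E s" using D0 E0 t s by simp
    show "(\<Sum>k<K. \<Sum>l<K. I k t * I l s * W k l) \<le> (\<Sum>k<K. I k t * I k s)"
    proof (cases "t \<le> s")
      case True
      have "(\<Sum>k<K. \<Sum>l<K. I k t * I l s * W k l) \<le> (\<Sum>k<K. \<Sum>l<K. I k t * W k l)"
        by (intro sum_mono) (use W0 in \<open>auto simp: I_def\<close>)
      also have "\<dots> = (\<Sum>k<K. I k t * (\<Sum>l<K. W k l))" by (simp add: sum_distrib_left)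
      also have "\<dots> \<le> (\<Sum>k<K. I k t)"
        by (intro sum_mono) (use Wr in \<open>auto simp: I_def\<close>)
      also have "\<dots> = (\<Sum>k<K. I k t * I k s)"
        by (intro sum.cong) (use True in \<open>auto simp: I_def\<close>)
      finally show ?thesis .
    next
      case False
      have "(\<Sum>k<K. \<Sum>l<K. I k t * I l s * W k l) \<le> (\<Sum>k<K. \<Sum>l<K. I l s * W k l)"
        by (intro sum_mono) (use W0 in \<open>auto simp: I_def\<close>)
      also have "\<dots> = (\<Sum>l<K. \<Sum>k<K. I l s * W k l)" by (rule sum.swap)
      also have "\<dots> = (\<Sum>l<K. I l s * (\<Sum>k<K. W k l))" 
        by (simp add: sum_distrib_left)
      also have "\<dots> \<le> (\<Sum>l<K. I l s)"
        by (intro sum_mono) (use Wc in \<open>auto simp: I_def\<close>)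
      also have "\<dots> = (\<Sum>k<K. I k t * I k s)"
        by (intro sum.cong) (use False in \<open>auto simp: I_def\<close>)
      finally show ?thesis .
    qed
  qed
  also have "\<dots> = (\<Sum>t<K. \<Sum>s<K. \<Sum>k<K. D t * E s * (I k t * I k s))"
    by (simp add: sum_distrib_left)
  also have "\<dots> = (\<Sum>t<K. \<Sum>k<K. \<Sum>s<K. D t * E s * (I k t * I k s))"
    by (rule sum.cong[OF refl], rule sum.swap)
  also have "\<dots> = (\<Sum>k<K. \<Sum>t<K. \<Sum>s<K. D t * E s * (I k t * I k s))"
    by (rule sum.swap)
  also have "\<dots> = (\<Sum>k<K. a k * b k)"
  proof (intro sum.cong refl)
    fix k assume k: "k \<in> {..<K}"
    have "a k * b k = (\<Sum>t<K. D t * I k t) * (\<Sum>s<K. E s * I k s)"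
      using aD'[of k] bE'[of k] k by simp
    also have "\<dots> = (\<Sum>t<K. \<Sum>s<K. D t * I k t * (E s * I k s))"
      unfolding sum_product ..
    finally show "(\<Sum>t<K. \<Sum>s<K. D t * E s * (I k t * I k s)) = a k * b k"
      by (simp add: mult_ac)
  qed
  finally show ?thesis .
qed


lemma orth_sq_rows: "orthogonal_mat k X \<Longrightarrow> i < k \<Longrightarrow> (\<Sum>l<k. (X $$ (i, l))\<^sup>2) = 1"
  using orth_rows[of k X i i] by (simp add: power2_eq_square)

lemma orth_sq_cols: "orthogonal_mat k X \<Longrightarrow> i < k \<Longrightarrow> (\<Sum>l<k. (X $$ (l, i))\<^sup>2) = 1"
  using orth_cols[of k X i i] by (simp add: power2_eq_square)

lemma cross_orth:
  assumes "orthogonal_mat k U1" "orthogonal_mat k U2"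
  shows "orthogonal_mat k (transpose_mat U1 * U2)"
    "i < k \<Longrightarrow> j < k \<Longrightarrow> (transpose_mat U1 * U2) $$ (i, j) = (\<Sum>l<k. U1 $$ (l, i) * U2 $$ (l, j))"
proof -
  show "orthogonal_mat k (transpose_mat U1 * U2)"
    by (rule orth_mult[OF orth_transpose]) (use assms in auto)
  assume "i < k" "j < k"
  then show "(transpose_mat U1 * U2) $$ (i, j) = (\<Sum>l<k. U1 $$ (l, i) * U2 $$ (l, j))"
    using orth_carrier[OF assms(1)] orth_carrier[OF assms(2)]
    by (subst mult_entry[of _ k k _ k]) (auto intro!: sum.cong)
qed

lemma cross_sums:
  assumes "orthogonal_mat k U1" "orthogonal_mat k U2" "K \<le> k"
  shows "i < K \<Longrightarrow> (\<Sum>l<K. (\<Sum>t<k. U1 $$ (t, i) * U2 $$ (t, l))\<^sup>2) \<le> 1"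
    and "i < K \<Longrightarrow> (\<Sum>l<K. (\<Sum>t<k. U1 $$ (t, l) * U2 $$ (t, i))\<^sup>2) \<le> 1"
proof -
  let ?X = "transpose_mat U1 * U2"
  have X: "orthogonal_mat k ?X" using cross_orth(1)[OF assms(1,2)] .
  assume i: "i < K"
  have "(\<Sum>l<K. (\<Sum>t<k. U1 $$ (t, i) * U2 $$ (t, l))\<^sup>2) = (\<Sum>l<K. (?X $$ (i, l))\<^sup>2)"
    using i assms(3) by (intro sum.cong refl) (simp add: cross_orth(2)[OF assms(1,2)])
  also have "\<dots> \<le> (\<Sum>l<k. (?X $$ (i, l))\<^sup>2)"
    by (rule sum_mono2) (use assms(3) in auto)
  also have "\<dots> = 1" using orth_sq_rows[OF X] i assms(3) by simp
  finally show "(\<Sum>l<K. (\<Sum>t<k. U1 $$ (t, i) * U2 $$ (t, l))\<^sup>2) \<le> 1" .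
  have "(\<Sum>l<K. (\<Sum>t<k. U1 $$ (t, l) * U2 $$ (t, i))\<^sup>2) = (\<Sum>l<K. (?X $$ (l, i))\<^sup>2)"
    using i assms(3) by (intro sum.cong refl) (simp add: cross_orth(2)[OF assms(1,2)])
  also have "\<dots> \<le> (\<Sum>l<k. (?X $$ (l, i))\<^sup>2)"
    by (rule sum_mono2) (use assms(3) in auto)
  also have "\<dots> = 1" using orth_sq_cols[OF X] i assms(3) by simp
  finally show "(\<Sum>l<K. (\<Sum>t<k. U1 $$ (t, l) * U2 $$ (t, i))\<^sup>2) \<le> 1" .
qed

lemma von_neumann:
  assumes U1: "orthogonal_mat m U1" and V1: "orthogonal_mat n V1"
    and U2: "orthogonal_mat m U2" and V2: "orthogonal_mat n V2"
    and a0: "\<forall>k<min m n. 0 \<le> a k" and b0: "\<forall>k<min m n. 0 \<le> b k"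
    and am: "\<forall>i j. i \<le> j \<and> j < min m n \<longrightarrow> a j \<le> a i"
    and bm: "\<forall>i j. i \<le> j \<and> j < min m n \<longrightarrow> b j \<le> b i"
  shows "fip (U1 * rdiag m n a * transpose_mat V1) (U2 * rdiag m n b * transpose_mat V2)
     \<le> (\<Sum>k<min m n. a k * b k)"
proof -
  let ?K = "min m n"
  define P where "P = (\<lambda>k l. \<Sum>i<m. U1 $$ (i, k) * U2 $$ (i, l))"
  define Q where "Q = (\<lambda>k l. \<Sum>j<n. V1 $$ (j, k) * V2 $$ (j, l))"
  define W where "W = (\<lambda>k l. ((P k l)\<^sup>2 + (Q k l)\<^sup>2) / 2)"
  have "fip (U1 * rdiag m n a * transpose_mat V1) (U2 * rdiag m n b * transpose_mat V2)
      = (\<Sum>k<?K. \<Sum>l<?K. a k * b l * P k l * Q k l)"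
    unfolding P_def Q_def
    by (rule fip_svd) (use U1 V1 U2 V2 in \<open>auto simp: orth_carrier\<close>)
  also have "\<dots> \<le> (\<Sum>k<?K. \<Sum>l<?K. a k * b l * W k l)"
  proof (intro sum_mono)
    fix k l assume k: "k \<in> {..<?K}" and l: "l \<in> {..<?K}"
    have "P k l * Q k l \<le> W k l"
    proof -
      have "0 \<le> (P k l - Q k l)\<^sup>2" by simp
      moreover have "(P k l - Q k l)\<^sup>2 = (P k l)\<^sup>2 - 2 * (P k l * Q k l) + (Q k l)\<^sup>2"
        by (simp add: power2_diff)
      ultimately have "2 * (P k l * Q k l) \<le> (P k l)\<^sup>2 + (Q k l)\<^sup>2" by linarith
      then show ?thesis unfolding W_def by (simp add: field_simps)
    qed
    moreover have "0 \<le> a k * b l" using a0 b0 k l by simp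
    ultimately show "a k * b l * P k l * Q k l \<le> a k * b l * W k l"
      by (metis mult.assoc mult_left_mono)
  qed
  also have "\<dots> \<le> (\<Sum>k<?K. a k * b k)"
  proof (rule rearr[OF a0 b0 am bm])
    show "\<forall>k<?K. \<forall>l<?K. 0 \<le> W k l" by (simp add: W_def)
    show "\<forall>k<?K. (\<Sum>l<?K. W k l) \<le> 1"
    proof (intro allI impI)
      fix k assume k: "k < ?K"
      have "(\<Sum>l<?K. (P k l)\<^sup>2) \<le> 1" unfolding P_def
        by (rule cross_sums(1)[OF U1 U2]) (use k in auto)
      moreover have "(\<Sum>l<?K. (Q k l)\<^sup>2) \<le> 1" unfolding Q_def
        by (rule cross_sums(1)[OF V1 V2]) (use k in auto)
      ultimately show "(\<Sum>l<?K. W k l) \<le> 1"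
        unfolding W_def by (simp add: sum_divide_distrib[symmetric] sum.distrib)
    qed
    show "\<forall>l<?K. (\<Sum>k<?K. W k l) \<le> 1"
    proof (intro allI impI)
      fix l assume l: "l < ?K"
      have "(\<Sum>k<?K. (P k l)\<^sup>2) \<le> 1" unfolding P_def
        by (rule cross_sums(2)[OF U1 U2]) (use l in auto)
      moreover have "(\<Sum>k<?K. (Q k l)\<^sup>2) \<le> 1" unfolding Q_def
        by (rule cross_sums(2)[OF V1 V2]) (use l in auto)
      ultimately show "(\<Sum>k<?K. W k l) \<le> 1"
        unfolding W_def by (simp add: sum_divide_distrib[symmetric] sum.distrib)
    qed
  qed
  finally show ?thesis .
qed

lemma same_frame:
  assumes U: "orthogonal_mat m U" and V: "orthogonal_mat n V"
  shows "fip (U * rdiag m n a * transpose_mat V) (U * rdiag m n b * transpose_mat V)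
     = (\<Sum>k<min m n. a k * b k)"
proof -
  let ?K = "min m n"
  have "fip (U * rdiag m n a * transpose_mat V) (U * rdiag m n b * transpose_mat V)
      = (\<Sum>k<?K. \<Sum>l<?K. a k * b l * (\<Sum>i<m. U $$ (i, k) * U $$ (i, l)) * (\<Sum>j<n. V $$ (j, k) * V $$ (j, l)))"
    by (rule fip_svd) (use U V in \<open>auto simp: orth_carrier\<close>)
  also have "\<dots> = (\<Sum>k<?K. \<Sum>l<?K. if l = k then a k * b k else 0)"
    using orth_cols[OF U] orth_cols[OF V] by (intro sum.cong refl) auto
  also have "\<dots> = (\<Sum>k<?K. a k * b k)" by simp
  finally show ?thesis .
qed

lemma svd_orth:
  assumes "is_svd m n M U s V"
  shows "orthogonal_mat m U" "orthogonal_mat n V" "M = U * rdiag m n s * transpose_mat V"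
    "M \<in> carrier_mat m n" "\<forall>i<min m n. 0 \<le> s i" "\<forall>i j. i \<le> j \<and> j < min m n \<longrightarrow> s j \<le> s i"
  using assms by (auto simp: is_svd_def)

lemma svd_unique:
  assumes A: "is_svd m n M U a V" and B: "is_svd m n M U' b V'" and k: "k < min m n"
  shows "a k = b k"
proof -
  note sa = svd_orth[OF A] and sb = svd_orth[OF B]
  let ?K = "min m n"
  have "fip M M = (\<Sum>k<?K. a k * a k)" using same_frame[OF sa(1,2)] sa(3) by metis
  moreover have "fip M M = (\<Sum>k<?K. b k * b k)" using same_frame[OF sb(1,2)] sb(3) by metis
  moreover have "fip M M \<le> (\<Sum>k<?K. a k * b k)"
    using von_neumann[OF sa(1,2) sb(1,2) sa(5) sb(5) sa(6) sb(6)] sa(3) sb(3) by metis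
  moreover have "(\<Sum>k<?K. (a k - b k)\<^sup>2) = (\<Sum>k<?K. a k * a k - 2 * (a k * b k) + b k * b k)"
    by (intro sum.cong refl) (simp add: power2_eq_square algebra_simps)
  moreover have "(\<Sum>k<?K. a k * a k - 2 * (a k * b k) + b k * b k)
     = (\<Sum>k<?K. a k * a k) - 2 * (\<Sum>k<?K. a k * b k) + (\<Sum>k<?K. b k * b k)"
    by (simp add: sum.distrib sum_subtractf sum_distrib_left)
  ultimately have "(\<Sum>k<?K. (a k - b k)\<^sup>2) \<le> 0" by linarith
  moreover have "(\<Sum>k<?K. (a k - b k)\<^sup>2) \<ge> 0" by (simp add: sum_nonneg)
  ultimately have "(\<Sum>k<?K. (a k - b k)\<^sup>2) = 0" by linarith
  then have "\<forall>k\<in>{..<?K}. (a k - b k)\<^sup>2 = 0" by (subst (asm) sum_nonneg_eq_0_iff) auto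
  then show ?thesis using k by simp
qed

definition sp :: "nat \<Rightarrow> (nat \<Rightarrow> real) \<Rightarrow> (nat \<Rightarrow> real) \<Rightarrow> real" where
  "sp n x y = (\<Sum>i<n. x i * y i)"

definition Sph :: "nat \<Rightarrow> nat \<Rightarrow> (nat \<Rightarrow> real) set" where
  "Sph m k = {x. (\<forall>i. i < k \<or> m \<le> i \<longrightarrow> x i = 0) \<and> sp m x x = 1}"

definition bil :: "real mat \<Rightarrow> (nat \<Rightarrow> real) \<Rightarrow> (nat \<Rightarrow> real) \<Rightarrow> real" where
  "bil B x y = (\<Sum>i<dim_row B. \<Sum>j<dim_col B. x i * B $$ (i, j) * y j)"

definition ev :: "nat \<Rightarrow> nat \<Rightarrow> real" where
  "ev k = (\<lambda>i. if i = k then 1 else 0)"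

definition mv :: "real mat \<Rightarrow> (nat \<Rightarrow> real) \<Rightarrow> nat \<Rightarrow> real" where
  "mv A x = (\<lambda>i. if i < dim_row A then \<Sum>j<dim_col A. A $$ (i, j) * x j else 0)"

lemma sp_ev_left: "k < m \<Longrightarrow> sp m (ev k) x = x k"
proof -
  assume k: "k < m"
  have "sp m (ev k) x = (\<Sum>i<m. if i = k then x i else 0)"
    unfolding sp_def ev_def by (rule sum.cong) auto
  then show ?thesis using k by simp
qed

lemma sp_ev_right: "k < m \<Longrightarrow> sp m x (ev k) = x k"
proof -
  assume k: "k < m"
  have "sp m x (ev k) = (\<Sum>i<m. if i = k then x i else 0)"
    unfolding sp_def ev_def by (rule sum.cong) auto
  then show ?thesis using k by simp
qed

lemma sp_comm: "sp m x y = sp m y x"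
  by (simp add: sp_def mult.commute)

lemma sp_neg: "sp m (\<lambda>i. - x i) y = - sp m x y"
  by (simp add: sp_def sum_negf)

lemma ev_Sph: "k \<le> i \<Longrightarrow> i < m \<Longrightarrow> ev i \<in> Sph m k"
  unfolding Sph_def using sp_ev_left[of i m "ev i"] by (auto simp: ev_def)

lemma neg_Sph: "x \<in> Sph m k \<Longrightarrow> (\<lambda>i. - x i) \<in> Sph m k"
  unfolding Sph_def sp_def by auto

lemma Sph_sq_le: "x \<in> Sph m k \<Longrightarrow> i < m \<Longrightarrow> x i * x i \<le> 1"
proof -
  assume x: "x \<in> Sph m k" and i: "i < m"
  have "x i * x i \<le> (\<Sum>l<m. x l * x l)"
    by (rule member_le_sum) (use i in auto)
  then show ?thesis using x by (simp add: Sph_def sp_def)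
qed

lemma closed_Sph: "closed (Sph m k)"
proof -
  have c1: "closed {x::nat \<Rightarrow> real. x i = 0}" for i
    by (rule closed_Collect_eq) (simp_all add: continuous_on_const)
  have "closed {x::nat \<Rightarrow> real. (i < k \<or> m \<le> i) \<longrightarrow> x i = 0}" for i
    using c1[of i] by (cases "i < k \<or> m \<le> i") auto
  then have c2: "closed {x::nat \<Rightarrow> real. \<forall>i. (i < k \<or> m \<le> i) \<longrightarrow> x i = 0}"
    by (rule closed_Collect_all)
  have c3: "closed {x::nat \<Rightarrow> real. sp m x x = 1}"
    by (rule closed_Collect_eq) (unfold sp_def, (intro continuous_intros; simp)+)
  have "Sph m k = {x::nat \<Rightarrow> real. \<forall>i. (i < k \<or> m \<le> i) \<longrightarrow> x i = 0} \<inter> {x. sp m x x = 1}"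
    by (auto simp: Sph_def)
  then show ?thesis using c2 c3 by (simp add: closed_Int)
qed

lemma compact_Sph: "compact (Sph m k)"
proof -
  let ?B = "Pi UNIV (\<lambda>i. if i < m then {-1..1} else {0::real})"
  have "compactin (product_topology (\<lambda>i. euclidean) UNIV) (PiE UNIV (\<lambda>i. if i < m then {-1..1} else {0::real}))"
    by (subst compactin_PiE) auto
  then have cB: "compact ?B"
    by (simp add: euclidean_product_topology PiE_UNIV_domain)
  have sub: "Sph m k \<subseteq> ?B"
  proof
    fix x assume x: "x \<in> Sph m k"
    show "x \<in> ?B"
    proof (simp only: Pi_iff, intro ballI)
      fix i
      show "x i \<in> (if i < m then {-1..1} else {0})"
      proof (cases "i < m")
        case True
        have "x i * x i \<le> 1" using Sph_sq_le[OF x True] .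
        then have "\<bar>x i\<bar> \<le> 1" using abs_square_le_1[of "x i"] by (simp add: power2_eq_square)
        then show ?thesis using True by auto
      next
        case False then show ?thesis using x by (auto simp: Sph_def)
      qed
    qed
  qed
  have "compact (?B \<inter> Sph m k)" using cB closed_Sph by (rule compact_Int_closed)
  moreover have "?B \<inter> Sph m k = Sph m k" using sub by blast
  ultimately show ?thesis by simp
qed

lemma cont_fst_i: "continuous_on S (\<lambda>p::(nat \<Rightarrow> real) \<times> (nat \<Rightarrow> real). fst p i)"
  by (rule continuous_on_product_then_coordinatewise) (intro continuous_intros)

lemma cont_snd_i: "continuous_on S (\<lambda>p::(nat \<Rightarrow> real) \<times> (nat \<Rightarrow> real). snd p i)"
  by (rule continuous_on_product_then_coordinatewise) (intro continuous_intros)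

lemma max_exists:
  assumes "k < m" "k < n"
  shows "\<exists>u\<in>Sph m k. \<exists>v\<in>Sph n k. \<forall>x\<in>Sph m k. \<forall>y\<in>Sph n k. bil B x y \<le> bil B u v"
proof -
  let ?S = "Sph m k \<times> Sph n k"
  have "compact ?S" by (intro compact_Times compact_Sph)
  moreover have "(ev k, ev k) \<in> ?S" using assms by (auto intro: ev_Sph)
  then have "?S \<noteq> {}" by blast
  moreover have "continuous_on ?S (\<lambda>p. bil B (fst p) (snd p))"
    unfolding bil_def by (intro continuous_intros cont_fst_i cont_snd_i)
  ultimately obtain p where p: "p \<in> ?S" "\<forall>q\<in>?S. bil B (fst q) (snd q) \<le> bil B (fst p) (snd p)"
    using continuous_attains_sup[of ?S "\<lambda>p. bil B (fst p) (snd p)"] by blast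
  show ?thesis
    by (rule bexI[of _ "fst p"], rule bexI[of _ "snd p"]) (use p in auto)
qed

lemma max_vec:
  assumes u: "u \<in> Sph m k" and wk: "\<forall>j<k. w j = 0"
    and mx: "\<forall>x\<in>Sph m k. sp m x w \<le> \<sigma>" and uw: "sp m u w = \<sigma>"
  shows "\<forall>j<m. w j = \<sigma> * u j"
proof -
  have "sp m (\<lambda>i. - u i) w \<le> \<sigma>" using mx neg_Sph[OF u] by blast
  then have s0: "0 \<le> \<sigma>" using uw by (simp add: sp_neg)
  have ww: "sp m w w \<le> \<sigma>\<^sup>2"
  proof (cases "sp m w w = 0")
    case True then show ?thesis by simp
  next
    case False
    have wpos: "0 < sp m w w" using False by (simp add: sp_def sum_nonneg order_le_neq_trans)
    define c where "c = sqrt (sp m w w)"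
    have c: "0 < c" "c * c = sp m w w" using wpos by (auto simp: c_def)
    define x where "x = (\<lambda>i. if i < k \<or> m \<le> i then 0 else w i / c)"
    have xw: "\<forall>i<m. x i = w i / c" using wk by (auto simp: x_def)
    have "sp m x x = sp m w w / (c * c)"
      using xw by (simp add: sp_def sum_divide_distrib)
    then have "sp m x x = 1" using c False by simp
    then have "x \<in> Sph m k" by (auto simp: Sph_def x_def)
    then have "sp m x w \<le> \<sigma>" using mx by blast
    moreover have "sp m x w = sp m w w / c"
      using xw by (simp add: sp_def sum_divide_distrib)
    moreover have "sp m w w / c = c" using c by (simp add: field_simps)
    ultimately have "c \<le> \<sigma>" by simp
    then have "c * c \<le> \<sigma> * \<sigma>" using c by (intro mult_mono) auto
    then show ?thesis using c by (simp add: power2_eq_square)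
  qed
  have uu: "sp m u u = 1" using u by (simp add: Sph_def)
  have "(\<Sum>j<m. (w j - \<sigma> * u j)\<^sup>2) = (\<Sum>j<m. w j * w j - 2 * \<sigma> * (u j * w j) + \<sigma>\<^sup>2 * (u j * u j))"
    by (intro sum.cong refl) (simp add: power2_eq_square algebra_simps)
  also have "\<dots> = sp m w w - 2 * \<sigma> * sp m u w + \<sigma>\<^sup>2 * sp m u u"
    by (simp add: sp_def sum.distrib sum_subtractf sum_distrib_left)
  also have "\<dots> \<le> 0" using ww uw uu by (simp add: power2_eq_square)
  finally have "(\<Sum>j<m. (w j - \<sigma> * u j)\<^sup>2) \<le> 0" .
  then have "(\<Sum>j<m. (w j - \<sigma> * u j)\<^sup>2) = 0" by (simp add: order_antisym sum_nonneg)
  then have "\<forall>j\<in>{..<m}. (w j - \<sigma> * u j)\<^sup>2 = 0" by (subst (asm) sum_nonneg_eq_0_iff) auto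
  then show ?thesis by simp
qed

definition hh :: "nat \<Rightarrow> nat \<Rightarrow> (nat \<Rightarrow> real) \<Rightarrow> real mat" where
  "hh m k u = mat m m (\<lambda>(i, j). (if i = j then 1 else 0)
      - (2 / sp m (\<lambda>l. ev k l - u l) (\<lambda>l. ev k l - u l)) * (ev k i - u i) * (ev k j - u j))"

lemma hh_carrier[simp]: "hh m k u \<in> carrier_mat m m"
  by (simp add: hh_def)

lemma hh_dims[simp]: "dim_row (hh m k u) = m" "dim_col (hh m k u) = m"
  by (simp_all add: hh_def)

lemma hh_entry:
  "i < m \<Longrightarrow> j < m \<Longrightarrow> hh m k u $$ (i, j) = (if i = j then 1 else 0)
      - (2 / sp m (\<lambda>l. ev k l - u l) (\<lambda>l. ev k l - u l)) * (ev k i - u i) * (ev k j - u j)"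
  by (simp add: hh_def)

lemma hh_sym: "i < m \<Longrightarrow> j < m \<Longrightarrow> hh m k u $$ (i, j) = hh m k u $$ (j, i)"
proof -
  assume i: "i < m" and j: "j < m"
  have e: "(if j = i then 1 else 0::real) = (if i = j then 1 else 0)" by auto
  show ?thesis unfolding hh_entry[OF i j] hh_entry[OF j i] by (simp only: mult_ac e)
qed

lemma hh_low:
  assumes u: "u \<in> Sph m k" and i: "i < m" and j: "j < m" and ij: "i < k \<or> j < k"
  shows "hh m k u $$ (i, j) = (if i = j then 1 else 0)"
proof -
  have "ev k i - u i = 0 \<or> ev k j - u j = 0" using u ij by (auto simp: Sph_def ev_def)
  then show ?thesis using i j by (auto simp: hh_entry)
qed

lemma hh_S:
  assumes u: "u \<in> Sph m k" and k: "k < m"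
  shows "sp m (\<lambda>l. ev k l - u l) (\<lambda>l. ev k l - u l) = 2 - 2 * u k"
proof -
  have "sp m (\<lambda>l. ev k l - u l) (\<lambda>l. ev k l - u l) = (\<Sum>l<m. ev k l * ev k l - 2 * (ev k l * u l) + u l * u l)"
    unfolding sp_def by (intro sum.cong refl) (simp add: algebra_simps)
  also have "\<dots> = sp m (ev k) (ev k) - 2 * sp m (ev k) u + sp m u u"
    by (simp add: sp_def sum.distrib sum_subtractf sum_distrib_left)
  also have "\<dots> = 2 - 2 * u k"
  proof -
    have e1: "sp m (ev k) (ev k) = 1" using sp_ev_left[OF k] by (simp add: ev_def)
    have e2: "sp m (ev k) u = u k" by (rule sp_ev_left[OF k])
    have e3: "sp m u u = 1" using u by (simp add: Sph_def)
    show ?thesis unfolding e1 e2 e3 by simp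
  qed
  finally show ?thesis .
qed

lemma hh_col:
  assumes u: "u \<in> Sph m k" and k: "k < m" and i: "i < m"
  shows "hh m k u $$ (i, k) = u i"
proof -
  let ?w = "\<lambda>l. ev k l - u l"
  have S: "sp m ?w ?w = 2 - 2 * u k" by (rule hh_S[OF u k])
  show ?thesis
  proof (cases "u k = 1")
    case True
    then have "sp m ?w ?w = 0" using S by simp
    then have "(\<Sum>l<m. (?w l)\<^sup>2) = 0" by (simp add: sp_def power2_eq_square)
    then have "\<forall>l\<in>{..<m}. (?w l)\<^sup>2 = 0" by (subst (asm) sum_nonneg_eq_0_iff) auto
    then have "?w i = 0" using i by simp
    then show ?thesis using i k True by (simp add: hh_entry ev_def split: if_splits)
  next
    case False
    have one: "2 / sp m ?w ?w * (ev k k - u k) = 1"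
      using S False by (simp add: ev_def field_simps)
    have "hh m k u $$ (i, k) = (if i = k then 1 else 0) - (ev k i - u i) * (2 / sp m ?w ?w * (ev k k - u k))"
      using hh_entry[OF i k, of k u] by (simp only: mult_ac)
    also have "\<dots> = (if i = k then 1 else 0) - (ev k i - u i)" by (simp only: one mult_1_right)
    also have "\<dots> = u i" by (simp add: ev_def)
    finally show ?thesis .
  qed
qed

lemma hh_orth:
  assumes u: "u \<in> Sph m k" and k: "k < m"
  shows "orthogonal_mat m (hh m k u)"
proof -
  define w where "w = (\<lambda>l. ev k l - u l)"
  define S where "S = sp m w w"
  define c where "c = 2 / S"
  define d where "d = (\<lambda>i l::nat. if i = l then 1 else (0::real))"
  have cS: "c * c * S = 2 * c" by (cases "S = 0") (auto simp: c_def)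
  have H: "\<And>i j. i < m \<Longrightarrow> j < m \<Longrightarrow> hh m k u $$ (i, j) = d i j - c * w i * w j"
    by (simp add: hh_entry c_def S_def w_def d_def)
  have s1: "(\<Sum>l<m. d i l * d j l) = d i j" if "i < m" for i j
  proof -
    have "(\<Sum>l<m. d i l * d j l) = (\<Sum>l<m. if i = l then d j l else 0)"
      by (rule sum.cong) (auto simp: d_def)
    then show ?thesis using that by (simp add: d_def)
  qed
  have s2: "(\<Sum>l<m. d i l * w l) = w i" if "i < m" for i
  proof -
    have "(\<Sum>l<m. d i l * w l) = (\<Sum>l<m. if i = l then w l else 0)"
      by (rule sum.cong) (auto simp: d_def)
    then show ?thesis using that by simp
  qed
  have "hh m k u * transpose_mat (hh m k u) = 1\<^sub>m m"
  proof (rule eq_matI)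
    fix i j assume i: "i < dim_row (1\<^sub>m m)" and j: "j < dim_col (1\<^sub>m m)"
    then have i: "i < m" and j: "j < m" by auto
    have "(hh m k u * transpose_mat (hh m k u)) $$ (i, j) = (\<Sum>l<m. hh m k u $$ (i, l) * transpose_mat (hh m k u) $$ (l, j))"
      by (rule mult_entry[of _ m m _ m]) (use i j in auto)
    also have "\<dots> = (\<Sum>l<m. (d i l - c * w i * w l) * (d j l - c * w j * w l))"
      using i j by (intro sum.cong refl) (simp add: H)
    also have "\<dots> = (\<Sum>l<m. d i l * d j l - c * w j * (d i l * w l) - c * w i * (d j l * w l) + c * c * w i * w j * (w l * w l))"
      by (intro sum.cong refl) (simp add: algebra_simps)
    also have "\<dots> = (\<Sum>l<m. d i l * d j l) - c * w j * (\<Sum>l<m. d i l * w l) - c * w i * (\<Sum>l<m. d j l * w l) + c * c * w i * w j * S"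
      by (simp add: sum.distrib sum_subtractf sum_distrib_left S_def sp_def)
    also have "\<dots> = d i j + w i * w j * (c * c * S - 2 * c)"
      using i j by (simp add: s1 s2, simp add: algebra_simps)
    also have "\<dots> = 1\<^sub>m m $$ (i, j)" using i j cS by (simp add: d_def)
    finally show "(hh m k u * transpose_mat (hh m k u)) $$ (i, j) = 1\<^sub>m m $$ (i, j)" .
  qed auto
  then show ?thesis by (simp add: orthogonal_mat_def)
qed

lemma tbq_entry:
  assumes P: "P \<in> carrier_mat m m" and B: "B \<in> carrier_mat m n" and Q: "Q \<in> carrier_mat n n"
    and i: "i < m" and j: "j < n"
  shows "(transpose_mat P * B * Q) $$ (i, j) = (\<Sum>a<m. \<Sum>b<n. P $$ (a, i) * B $$ (a, b) * Q $$ (b, j))"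
proof -
  have PB: "transpose_mat P * B \<in> carrier_mat m n" using P B by auto
  have "(transpose_mat P * B * Q) $$ (i, j) = (\<Sum>b<n. (transpose_mat P * B) $$ (i, b) * Q $$ (b, j))"
    by (rule mult_entry[OF PB Q i j])
  also have "\<dots> = (\<Sum>b<n. (\<Sum>a<m. P $$ (a, i) * B $$ (a, b)) * Q $$ (b, j))"
  proof (rule sum.cong[OF refl])
    fix b assume b: "b \<in> {..<n}"
    have "(transpose_mat P * B) $$ (i, b) = (\<Sum>a<m. transpose_mat P $$ (i, a) * B $$ (a, b))"
      by (rule mult_entry[of _ m m _ n]) (use P B i b in auto)
    also have "\<dots> = (\<Sum>a<m. P $$ (a, i) * B $$ (a, b))"
      using P i by (intro sum.cong refl) auto
    finally show "(transpose_mat P * B) $$ (i, b) * Q $$ (b, j) = (\<Sum>a<m. P $$ (a, i) * B $$ (a, b)) * Q $$ (b, j)"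
      by simp
  qed
  also have "\<dots> = (\<Sum>b<n. \<Sum>a<m. P $$ (a, i) * B $$ (a, b) * Q $$ (b, j))"
    by (simp add: sum_distrib_right)
  also have "\<dots> = (\<Sum>a<m. \<Sum>b<n. P $$ (a, i) * B $$ (a, b) * Q $$ (b, j))"
    by (rule sum.swap)
  finally show ?thesis .
qed

lemma sum4_factor:
  fixes x y :: "nat \<Rightarrow> real" and p q r :: "nat \<Rightarrow> nat \<Rightarrow> real" and A B C D :: "nat set"
  shows "(\<Sum>i\<in>A. \<Sum>j\<in>B. x i * (\<Sum>a\<in>C. \<Sum>b\<in>D. p a i * q a b * r b j) * y j)
       = (\<Sum>a\<in>C. \<Sum>b\<in>D. (\<Sum>i\<in>A. p a i * x i) * q a b * (\<Sum>j\<in>B. r b j * y j))"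
proof -
  have "(\<Sum>i\<in>A. \<Sum>j\<in>B. x i * (\<Sum>a\<in>C. \<Sum>b\<in>D. p a i * q a b * r b j) * y j)
      = (\<Sum>i\<in>A. \<Sum>j\<in>B. \<Sum>a\<in>C. \<Sum>b\<in>D. x i * p a i * q a b * r b j * y j)"
    by (simp add: sum_distrib_left sum_distrib_right mult_ac)
  also have "\<dots> = (\<Sum>a\<in>C. \<Sum>b\<in>D. \<Sum>i\<in>A. \<Sum>j\<in>B. x i * p a i * q a b * r b j * y j)"
    by (rule swap4g)
  also have "\<dots> = (\<Sum>a\<in>C. \<Sum>b\<in>D. (\<Sum>i\<in>A. p a i * x i) * q a b * (\<Sum>j\<in>B. r b j * y j))"
    by (simp add: sum_distrib_left sum_distrib_right mult_ac)
  finally show ?thesis .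
qed

lemma bil_tbq:
  assumes P: "P \<in> carrier_mat m m" and B: "B \<in> carrier_mat m n" and Q: "Q \<in> carrier_mat n n"
  shows "bil (transpose_mat P * B * Q) x y = bil B (mv P x) (mv Q y)"
proof -
  have d: "dim_row (transpose_mat P * B * Q) = m" "dim_col (transpose_mat P * B * Q) = n"
    using P B Q by auto
  have "bil (transpose_mat P * B * Q) x y = (\<Sum>i<m. \<Sum>j<n. x i * (transpose_mat P * B * Q) $$ (i, j) * y j)"
    unfolding bil_def d ..
  also have "\<dots> = (\<Sum>i<m. \<Sum>j<n. x i * (\<Sum>a<m. \<Sum>b<n. P $$ (a, i) * B $$ (a, b) * Q $$ (b, j)) * y j)"
    by (intro sum.cong refl) (simp only: lessThan_iff tbq_entry[OF P B Q])
  also have "\<dots> = (\<Sum>a<m. \<Sum>b<n. (\<Sum>i<m. P $$ (a, i) * x i) * B $$ (a, b) * (\<Sum>j<n. Q $$ (b, j) * y j))"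
    by (rule sum4_factor)
  also have "\<dots> = bil B (mv P x) (mv Q y)"
    unfolding bil_def mv_def using P B Q by (intro sum.cong refl) auto
  finally show ?thesis .
qed

lemma bil_sp_left: "B \<in> carrier_mat m n \<Longrightarrow> bil B x y = sp m x (mv B y)"
  unfolding bil_def sp_def mv_def by (auto simp: sum_distrib_left mult_ac intro!: sum.cong)

lemma bil_sp_right: "B \<in> carrier_mat m n \<Longrightarrow> bil B x y = sp n (mv (transpose_mat B) x) y"
proof -
  assume B: "B \<in> carrier_mat m n"
  have "bil B x y = (\<Sum>j<n. \<Sum>i<m. x i * B $$ (i, j) * y j)"
    unfolding bil_def using B by (simp add: sum.swap[of _ "{..<m}"])
  also have "\<dots> = (\<Sum>j<n. (\<Sum>i<m. B $$ (i, j) * x i) * y j)"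
    by (simp add: sum_distrib_left sum_distrib_right mult_ac)
  also have "\<dots> = sp n (mv (transpose_mat B) x) y"
    unfolding sp_def mv_def using B by (intro sum.cong refl) auto
  finally show ?thesis .
qed

lemma mv_norm:
  assumes H: "orthogonal_mat m H"
  shows "sp m (mv H x) (mv H x) = sp m x x"
proof -
  have Hc: "H \<in> carrier_mat m m" using H by (rule orth_carrier)
  have "sp m (mv H x) (mv H x) = (\<Sum>r<m. (\<Sum>l<m. H $$ (r, l) * x l) * (\<Sum>l'<m. H $$ (r, l') * x l'))"
    unfolding sp_def mv_def using Hc by (intro sum.cong refl) auto
  also have "\<dots> = (\<Sum>r<m. \<Sum>l<m. \<Sum>l'<m. (x l * x l') * (H $$ (r, l) * H $$ (r, l')))"
    by (intro sum.cong refl) (simp add: sum_product mult_ac)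
  also have "\<dots> = (\<Sum>l<m. \<Sum>r<m. \<Sum>l'<m. (x l * x l') * (H $$ (r, l) * H $$ (r, l')))"
    by (rule sum.swap)
  also have "\<dots> = (\<Sum>l<m. \<Sum>l'<m. \<Sum>r<m. (x l * x l') * (H $$ (r, l) * H $$ (r, l')))"
    by (rule sum.cong[OF refl], rule sum.swap)
  also have "\<dots> = (\<Sum>l<m. \<Sum>l'<m. (x l * x l') * (if l = l' then 1 else 0))"
    by (intro sum.cong refl) (simp add: sum_distrib_left[symmetric] orth_cols[OF H])
  also have "\<dots> = (\<Sum>l<m. x l * x l)"
    by (intro sum.cong refl) (simp add: if_distrib cong: if_cong)
  finally show ?thesis by (simp add: sp_def)
qed

lemma mv_Sph:
  assumes H: "orthogonal_mat m H" and low: "\<forall>r<i. \<forall>l<m. H $$ (r, l) = (if r = l then 1 else 0)"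
    and x: "x \<in> Sph m i"
  shows "mv H x \<in> Sph m i"
proof -
  have Hc: "H \<in> carrier_mat m m" using H by (rule orth_carrier)
  have z: "mv H x r = 0" if r: "r < i \<or> m \<le> r" for r
  proof (cases "m \<le> r")
    case True then show ?thesis using Hc by (simp add: mv_def)
  next
    case False
    then have rm: "r < m" and ri: "r < i" using r by auto
    have "mv H x r = (\<Sum>l<m. H $$ (r, l) * x l)" using Hc rm by (simp add: mv_def)
    also have "\<dots> = (\<Sum>l<m. if r = l then x l else 0)"
      using low ri by (intro sum.cong refl) auto
    also have "\<dots> = x r" using rm by simp
    also have "\<dots> = 0" using x ri by (simp add: Sph_def)
    finally show ?thesis .
  qed
  moreover have "sp m (mv H x) (mv H x) = 1" using mv_norm[OF H] x by (simp add: Sph_def)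
  ultimately show ?thesis by (simp add: Sph_def)
qed

definition good :: "nat \<Rightarrow> nat \<Rightarrow> real mat \<Rightarrow> nat \<Rightarrow> real mat \<Rightarrow> real mat \<Rightarrow> bool" where
  "good m n M k U V \<longleftrightarrow> orthogonal_mat m U \<and> orthogonal_mat n V \<and>
    (\<forall>i<m. \<forall>j<n. (i < k \<or> j < k) \<and> i \<noteq> j \<longrightarrow> (transpose_mat U * M * V) $$ (i, j) = 0) \<and>
    (\<forall>i<k. \<forall>x\<in>Sph m i. \<forall>y\<in>Sph n i. bil (transpose_mat U * M * V) x y \<le> (transpose_mat U * M * V) $$ (i, i))"

lemma orth_one: "orthogonal_mat k (1\<^sub>m k)"
  by (simp add: orthogonal_mat_def)

lemma good0: "good m n M 0 (1\<^sub>m m) (1\<^sub>m n)"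
  by (simp add: good_def orth_one)

lemma reframe:
  fixes U H M V G :: "real mat"
  assumes U: "U \<in> carrier_mat m m" and H: "H \<in> carrier_mat m m" and M: "M \<in> carrier_mat m n"
    and V: "V \<in> carrier_mat n n" and G: "G \<in> carrier_mat n n"
  shows "transpose_mat (U * H) * M * (V * G) = transpose_mat H * (transpose_mat U * M * V) * G"
proof -
  have c1: "transpose_mat H \<in> carrier_mat m m" "transpose_mat U \<in> carrier_mat m m"
    "transpose_mat U * M \<in> carrier_mat m n" "transpose_mat H * (transpose_mat U * M) \<in> carrier_mat m n"
    using U H M by auto
  have "transpose_mat (U * H) * M * (V * G) = transpose_mat H * transpose_mat U * M * (V * G)"
    by (simp add: transpose_mult[OF U H])
  also have "transpose_mat H * transpose_mat U * M = transpose_mat H * (transpose_mat U * M)"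
    by (rule assoc_mult_mat[OF c1(1) c1(2) M])
  also have "transpose_mat H * (transpose_mat U * M) * (V * G) = transpose_mat H * (transpose_mat U * M) * V * G"
    by (rule assoc_mult_mat[OF c1(4) V G, symmetric])
  also have "transpose_mat H * (transpose_mat U * M) * V = transpose_mat H * (transpose_mat U * M * V)"
    by (rule assoc_mult_mat[OF c1(1) c1(3) V])
  finally show ?thesis .
qed

lemma good_step:
  assumes M: "M \<in> carrier_mat m n" and k: "k < min m n" and g: "good m n M k U V"
  shows "\<exists>U' V'. good m n M (Suc k) U' V'"
proof -
  have km: "k < m" and kn: "k < n" using k by auto
  have oU: "orthogonal_mat m U" and oV: "orthogonal_mat n V" using g by (auto simp: good_def)
  have Uc: "U \<in> carrier_mat m m" and Vc: "V \<in> carrier_mat n n" using oU oV by (auto simp: orth_carrier)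
  define B where "B = transpose_mat U * M * V"
  have Bc: "B \<in> carrier_mat m n" using Uc Vc M by (auto simp: B_def)
  have zero: "\<And>i j. i < m \<Longrightarrow> j < n \<Longrightarrow> (i < k \<or> j < k) \<Longrightarrow> i \<noteq> j \<Longrightarrow> B $$ (i, j) = 0"
    using g by (auto simp: good_def B_def)
  have maxp: "\<And>i x y. i < k \<Longrightarrow> x \<in> Sph m i \<Longrightarrow> y \<in> Sph n i \<Longrightarrow> bil B x y \<le> B $$ (i, i)"
    using g unfolding good_def B_def by blast
  obtain u v where u: "u \<in> Sph m k" and v: "v \<in> Sph n k"
    and mx: "\<forall>x\<in>Sph m k. \<forall>y\<in>Sph n k. bil B x y \<le> bil B u v"
    using max_exists[OF km kn, of B] by blast
  define \<sigma> where "\<sigma> = bil B u v"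
  have uk: "\<And>j. j < k \<Longrightarrow> u j = 0" and vk: "\<And>j. j < k \<Longrightarrow> v j = 0"
    using u v by (auto simp: Sph_def)
  have E1: "\<forall>j<m. mv B v j = \<sigma> * u j"
  proof (rule max_vec[OF u])
    show "\<forall>j<k. mv B v j = 0"
    proof (intro allI impI)
      fix j assume j: "j < k"
      have "mv B v j = (\<Sum>l<n. B $$ (j, l) * v l)" using Bc j km by (simp add: mv_def)
      also have "\<dots> = 0"
      proof (rule sum.neutral, intro ballI)
        fix l assume l: "l \<in> {..<n}"
        show "B $$ (j, l) * v l = 0"
          using zero[of j l] vk[of j] j km l by (cases "j = l") auto
      qed
      finally show "mv B v j = 0" .
    qed
    show "\<forall>x\<in>Sph m k. sp m x (mv B v) \<le> \<sigma>"
      using mx v bil_sp_left[OF Bc] by (auto simp: \<sigma>_def)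
    show "sp m u (mv B v) = \<sigma>" using bil_sp_left[OF Bc] by (simp add: \<sigma>_def)
  qed
  have E1': "\<And>a. a < m \<Longrightarrow> (\<Sum>b<n. B $$ (a, b) * v b) = \<sigma> * u a"
    using E1 Bc by (auto simp: mv_def)
  have BTc: "transpose_mat B \<in> carrier_mat n m" using Bc by simp
  have E2: "\<forall>j<n. mv (transpose_mat B) u j = \<sigma> * v j"
  proof (rule max_vec[OF v])
    show "\<forall>j<k. mv (transpose_mat B) u j = 0"
    proof (intro allI impI)
      fix j assume j: "j < k"
      have "mv (transpose_mat B) u j = (\<Sum>l<m. B $$ (l, j) * u l)" using Bc j kn by (simp add: mv_def)
      also have "\<dots> = 0"
      proof (rule sum.neutral, intro ballI)
        fix l assume l: "l \<in> {..<m}"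
        show "B $$ (l, j) * u l = 0"
          using zero[of l j] uk[of j] j kn l by (cases "j = l") auto
      qed
      finally show "mv (transpose_mat B) u j = 0" .
    qed
    show "\<forall>y\<in>Sph n k. sp n y (mv (transpose_mat B) u) \<le> \<sigma>"
      using mx u bil_sp_right[OF Bc] by (auto simp: \<sigma>_def sp_comm)
    show "sp n v (mv (transpose_mat B) u) = \<sigma>" using bil_sp_right[OF Bc] by (simp add: \<sigma>_def sp_comm)
  qed
  have E2': "\<And>b. b < n \<Longrightarrow> (\<Sum>a<m. B $$ (a, b) * u a) = \<sigma> * v b"
    using E2 Bc by (auto simp: mv_def)
  define Hu where "Hu = hh m k u"
  define Hv where "Hv = hh n k v"
  have oHu: "orthogonal_mat m Hu" unfolding Hu_def by (rule hh_orth[OF u km])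
  have oHv: "orthogonal_mat n Hv" unfolding Hv_def by (rule hh_orth[OF v kn])
  have Huc: "Hu \<in> carrier_mat m m" and Hvc: "Hv \<in> carrier_mat n n" by (auto simp: Hu_def Hv_def)
  have Hu_low: "\<And>a i. a < m \<Longrightarrow> i < k \<Longrightarrow> Hu $$ (a, i) = (if a = i then 1 else 0)"
    unfolding Hu_def using hh_low[OF u] km by auto
  have Hu_low': "\<And>a i. a < m \<Longrightarrow> i < k \<Longrightarrow> Hu $$ (i, a) = (if a = i then 1 else 0)"
    unfolding Hu_def using hh_low[OF u] km by auto
  have Hv_low: "\<And>a i. a < n \<Longrightarrow> i < k \<Longrightarrow> Hv $$ (a, i) = (if a = i then 1 else 0)"
    unfolding Hv_def using hh_low[OF v] kn by auto
  have Hv_low': "\<And>a i. a < n \<Longrightarrow> i < k \<Longrightarrow> Hv $$ (i, a) = (if a = i then 1 else 0)"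
    unfolding Hv_def using hh_low[OF v] kn by auto
  have Hu_col: "\<And>a. a < m \<Longrightarrow> Hu $$ (a, k) = u a" unfolding Hu_def using hh_col[OF u km] by auto
  have Hv_col: "\<And>b. b < n \<Longrightarrow> Hv $$ (b, k) = v b" unfolding Hv_def using hh_col[OF v kn] by auto
  define U' where "U' = U * Hu"
  define V' where "V' = V * Hv"
  define B' where "B' = transpose_mat U' * M * V'"
  have B'eq: "B' = transpose_mat Hu * B * Hv"
    unfolding B'_def U'_def V'_def B_def by (rule reframe[OF Uc Huc M Vc Hvc])
  have ent: "\<And>i j. i < m \<Longrightarrow> j < n \<Longrightarrow> B' $$ (i, j) = (\<Sum>a<m. \<Sum>b<n. Hu $$ (a, i) * B $$ (a, b) * Hv $$ (b, j))"
    unfolding B'eq by (rule tbq_entry[OF Huc Bc Hvc])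
  have rowA: "B' $$ (i, j) = (if i = j then B $$ (i, i) else 0)" if i: "i < k" and j: "j < n" for i j
  proof -
    have im: "i < m" using i km by simp
    have "B' $$ (i, j) = (\<Sum>a<m. \<Sum>b<n. Hu $$ (a, i) * B $$ (a, b) * Hv $$ (b, j))" by (rule ent[OF im j])
    also have "\<dots> = (\<Sum>a<m. if a = i then (\<Sum>b<n. B $$ (i, b) * Hv $$ (b, j)) else 0)"
      using Hu_low i by (intro sum.cong refl) (auto simp: sum_distrib_left)
    also have "\<dots> = (\<Sum>b<n. B $$ (i, b) * Hv $$ (b, j))" using im by simp
    also have "\<dots> = (\<Sum>b<n. if b = i then B $$ (i, i) * Hv $$ (i, j) else 0)"
      using zero im i by (intro sum.cong refl) auto
    also have "\<dots> = B $$ (i, i) * Hv $$ (i, j)" using i kn by simp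
    also have "\<dots> = (if i = j then B $$ (i, i) else 0)" using Hv_low' j i by auto
    finally show ?thesis .
  qed
  have colA: "B' $$ (i, j) = (if i = j then B $$ (j, j) else 0)" if i: "i < m" and j: "j < k" for i j
  proof -
    have jn: "j < n" using j kn by simp
    have "B' $$ (i, j) = (\<Sum>a<m. \<Sum>b<n. Hu $$ (a, i) * B $$ (a, b) * Hv $$ (b, j))" by (rule ent[OF i jn])
    also have "\<dots> = (\<Sum>a<m. Hu $$ (a, i) * B $$ (a, j))"
    proof (rule sum.cong[OF refl])
      fix a assume a: "a \<in> {..<m}"
      have "(\<Sum>b<n. Hu $$ (a, i) * B $$ (a, b) * Hv $$ (b, j)) = (\<Sum>b<n. if b = j then Hu $$ (a, i) * B $$ (a, j) else 0)"
        using Hv_low j by (intro sum.cong refl) auto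
      also have "\<dots> = Hu $$ (a, i) * B $$ (a, j)" using jn by simp
      finally show "(\<Sum>b<n. Hu $$ (a, i) * B $$ (a, b) * Hv $$ (b, j)) = Hu $$ (a, i) * B $$ (a, j)" .
    qed
    also have "\<dots> = (\<Sum>a<m. if a = j then Hu $$ (j, i) * B $$ (j, j) else 0)"
      using zero jn j by (intro sum.cong refl) auto
    also have "\<dots> = Hu $$ (j, i) * B $$ (j, j)" using j km by simp
    also have "\<dots> = (if i = j then B $$ (j, j) else 0)" using Hu_low' i j by auto
    finally show ?thesis .
  qed
  have rowK: "B' $$ (k, j) = \<sigma> * (if k = j then 1 else 0)" if j: "j < n" for j
  proof -
    have "B' $$ (k, j) = (\<Sum>a<m. \<Sum>b<n. u a * B $$ (a, b) * Hv $$ (b, j))"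
      using ent[OF km j] Hu_col by simp
    also have "\<dots> = (\<Sum>b<n. \<Sum>a<m. u a * B $$ (a, b) * Hv $$ (b, j))" by (rule sum.swap)
    also have "\<dots> = (\<Sum>b<n. (\<Sum>a<m. B $$ (a, b) * u a) * Hv $$ (b, j))"
      by (simp add: sum_distrib_left sum_distrib_right mult_ac)
    also have "\<dots> = (\<Sum>b<n. \<sigma> * (Hv $$ (b, k) * Hv $$ (b, j)))"
      using E2' Hv_col by (intro sum.cong refl) auto
    also have "\<dots> = \<sigma> * (if k = j then 1 else 0)"
      by (simp add: sum_distrib_left[symmetric] orth_cols[OF oHv kn j])
    finally show ?thesis .
  qed
  have colK: "B' $$ (i, k) = \<sigma> * (if i = k then 1 else 0)" if i: "i < m" for i
  proof -
    have "B' $$ (i, k) = (\<Sum>a<m. \<Sum>b<n. Hu $$ (a, i) * B $$ (a, b) * v b)"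
      using ent[OF i kn] Hv_col by simp
    also have "\<dots> = (\<Sum>a<m. Hu $$ (a, i) * (\<Sum>b<n. B $$ (a, b) * v b))"
      by (simp add: sum_distrib_left mult_ac)
    also have "\<dots> = (\<Sum>a<m. \<sigma> * (Hu $$ (a, i) * Hu $$ (a, k)))"
      using E1' Hu_col by (intro sum.cong refl) auto
    also have "\<dots> = \<sigma> * (if i = k then 1 else 0)"
      by (simp add: sum_distrib_left[symmetric] orth_cols[OF oHu i km])
    finally show ?thesis .
  qed
  have oU': "orthogonal_mat m U'" unfolding U'_def by (rule orth_mult[OF oU oHu])
  have oV': "orthogonal_mat n V'" unfolding V'_def by (rule orth_mult[OF oV oHv])
  have zero': "\<forall>i<m. \<forall>j<n. (i < Suc k \<or> j < Suc k) \<and> i \<noteq> j \<longrightarrow> B' $$ (i, j) = 0"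
  proof (intro allI impI)
    fix i j assume i: "i < m" and j: "j < n" and c: "(i < Suc k \<or> j < Suc k) \<and> i \<noteq> j"
    show "B' $$ (i, j) = 0"
    proof (cases "i < k")
      case True then show ?thesis using rowA[OF True j] c by simp
    next
      case ik: False
      show ?thesis
      proof (cases "j < k")
        case True then show ?thesis using colA[OF i True] c by simp
      next
        case False
        then have "i = k \<or> j = k" using ik c by auto
        then show ?thesis using rowK[OF j] colK[OF i] c by auto
      qed
    qed
  qed
  have max': "\<forall>i<Suc k. \<forall>x\<in>Sph m i. \<forall>y\<in>Sph n i. bil B' x y \<le> B' $$ (i, i)"
  proof (intro allI impI ballI)
    fix i x y assume i: "i < Suc k" and x: "x \<in> Sph m i" and y: "y \<in> Sph n i"
    have xs: "mv Hu x \<in> Sph m i"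
      by (rule mv_Sph[OF oHu _ x]) (use Hu_low' i in \<open>auto\<close>)
    have ys: "mv Hv y \<in> Sph n i"
      by (rule mv_Sph[OF oHv _ y]) (use Hv_low' i in \<open>auto\<close>)
    have "bil B' x y = bil B (mv Hu x) (mv Hv y)" unfolding B'eq by (rule bil_tbq[OF Huc Bc Hvc])
    also have "\<dots> \<le> B' $$ (i, i)"
    proof (cases "i < k")
      case True
      then show ?thesis using maxp[OF True xs ys] rowA[OF True] kn by simp
    next
      case False
      then have "i = k" using i by simp
      then show ?thesis using mx xs ys rowK[OF kn] by (simp add: \<sigma>_def)
    qed
    finally show "bil B' x y \<le> B' $$ (i, i)" .
  qed
  have "good m n M (Suc k) U' V'"
    unfolding good_def using oU' oV' zero' max' by (simp add: B'_def)
  then show ?thesis by blast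
qed

lemma good_all: "M \<in> carrier_mat m n \<Longrightarrow> k \<le> min m n \<Longrightarrow> \<exists>U V. good m n M k U V"
proof (induction k)
  case 0 then show ?case using good0 by blast
next
  case (Suc k)
  then obtain U V where "good m n M k U V" by auto
  then show ?case using good_step[OF Suc.prems(1), of k U V] Suc.prems by auto
qed

lemma bil_neg_right: "bil B x (\<lambda>l. - y l) = - bil B x y"
  unfolding bil_def by (simp add: sum_negf)

lemma bil_ev:
  assumes B: "B \<in> carrier_mat m n" and i: "i < m" and j: "j < n"
  shows "bil B (ev i) (ev j) = B $$ (i, j)"
proof -
  have "bil B (ev i) (ev j) = mv B (ev j) i" using bil_sp_left[OF B] sp_ev_left[OF i] by simp
  also have "\<dots> = sp n (\<lambda>l. B $$ (i, l)) (ev j)" using B i by (simp add: mv_def sp_def)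
  also have "\<dots> = B $$ (i, j)" by (rule sp_ev_right[OF j])
  finally show ?thesis .
qed

lemma svd_exists:
  assumes M: "M \<in> carrier_mat m n"
  shows "\<exists>U s V. is_svd m n M U s V"
proof -
  obtain U V where g: "good m n M (min m n) U V" using good_all[OF M] by blast
  have oU: "orthogonal_mat m U" and oV: "orthogonal_mat n V" using g by (auto simp: good_def)
  have Uc: "U \<in> carrier_mat m m" and Vc: "V \<in> carrier_mat n n" using oU oV by (auto simp: orth_carrier)
  define B where "B = transpose_mat U * M * V"
  have Bc: "B \<in> carrier_mat m n" using Uc Vc M by (auto simp: B_def)
  have zero: "\<And>i j. i < m \<Longrightarrow> j < n \<Longrightarrow> i \<noteq> j \<Longrightarrow> B $$ (i, j) = 0"
  proof -
    fix i j assume i: "i < m" and j: "j < n" and ij: "i \<noteq> j"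
    have "i < min m n \<or> j < min m n" using i j by auto
    then show "B $$ (i, j) = 0" using g i j ij by (auto simp: good_def B_def)
  qed
  have maxp: "\<And>i x y. i < min m n \<Longrightarrow> x \<in> Sph m i \<Longrightarrow> y \<in> Sph n i \<Longrightarrow> bil B x y \<le> B $$ (i, i)"
    using g unfolding good_def B_def by blast
  define s where "s = (\<lambda>i. B $$ (i, i))"
  have BR: "B = rdiag m n s"
    by (rule eq_matI) (use Bc zero in \<open>auto simp: rdiag_def s_def\<close>)
  have c1: "transpose_mat U \<in> carrier_mat m m" "transpose_mat U * M \<in> carrier_mat m n"
    "transpose_mat V \<in> carrier_mat n n" using Uc M Vc by auto
  have "U * B = U * (transpose_mat U * M) * V"
    unfolding B_def by (rule assoc_mult_mat[OF Uc c1(2) Vc, symmetric])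
  also have "U * (transpose_mat U * M) = U * transpose_mat U * M"
    by (rule assoc_mult_mat[OF Uc c1(1) M, symmetric])
  also have "\<dots> = M" using oU M by (simp add: orthogonal_mat_def)
  finally have UB: "U * B = M * V" .
  have "U * B * transpose_mat V = M * (V * transpose_mat V)"
    unfolding UB by (rule assoc_mult_mat[OF M Vc c1(3)])
  also have "\<dots> = M" using oV M by (simp add: orthogonal_mat_def)
  finally have MR: "M = U * rdiag m n s * transpose_mat V" using BR by simp
  have s0: "\<forall>i<min m n. 0 \<le> s i"
  proof (intro allI impI)
    fix i assume i: "i < min m n"
    have "bil B (ev i) (\<lambda>l. - ev i l) \<le> B $$ (i, i)"
      by (rule maxp[OF i]) (use i in \<open>auto intro: ev_Sph neg_Sph\<close>)
    then show "0 \<le> s i" using bil_ev[OF Bc, of i i] i by (simp add: bil_neg_right s_def)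
  qed
  have sm: "\<forall>i j. i \<le> j \<and> j < min m n \<longrightarrow> s j \<le> s i"
  proof (intro allI impI)
    fix i j assume ij: "i \<le> j \<and> j < min m n"
    have "bil B (ev j) (ev j) \<le> B $$ (i, i)"
      by (rule maxp) (use ij in \<open>auto intro: ev_Sph\<close>)
    then show "s j \<le> s i" using bil_ev[OF Bc, of j j] ij by (simp add: s_def)
  qed
  have "is_svd m n M U s V" unfolding is_svd_def using M oU oV s0 sm MR by blast
  then show ?thesis by blast
qed

lemma is_svd_cong:
  assumes "is_svd m n M U s V" "\<And>i. i < min m n \<Longrightarrow> s' i = s i"
  shows "is_svd m n M U s' V"
proof -
  have rd: "rdiag m n s' = rdiag m n s" by (rule rdiag_cong) (use assms(2) in auto)
  from assms(1) have a1: "M \<in> carrier_mat m n" and a2: "orthogonal_mat m U" and a3: "orthogonal_mat n V"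
    and a4: "\<forall>i<min m n. 0 \<le> s i" and a5: "\<forall>i j. i \<le> j \<and> j < min m n \<longrightarrow> s j \<le> s i"
    and a6: "M = U * rdiag m n s * transpose_mat V"
    unfolding is_svd_def by blast+
  have a4': "\<forall>i<min m n. 0 \<le> s' i" using a4 assms(2) by simp
  have a5': "\<forall>i j. i \<le> j \<and> j < min m n \<longrightarrow> s' j \<le> s' i"
  proof (intro allI impI)
    fix i j assume h: "i \<le> j \<and> j < min m n"
    then have "i < min m n" by auto
    then show "s' j \<le> s' i" using a5 assms(2) h by simp
  qed
  have a6': "M = U * rdiag m n s' * transpose_mat V" using a6 rd by simp
  show ?thesis unfolding is_svd_def using a1 a2 a3 a4' a5' a6' by blast
qed

lemma sing_vals_eq:
  assumes A: "is_svd m n M U s V" and i: "i < min m n"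
  shows "sing_vals M i = s i"
proof -
  have Mc: "M \<in> carrier_mat m n" using A unfolding is_svd_def by blast
  then have dr: "dim_row M = m" and dc: "dim_col M = n" by auto
  let ?P = "\<lambda>s'. (\<forall>i \<ge> min m n. s' i = 0) \<and> (\<exists>U V. is_svd m n M U s' V)"
  define s0 where "s0 = (\<lambda>i. if i < min m n then s i else 0)"
  have "is_svd m n M U s0 V" by (rule is_svd_cong[OF A]) (simp add: s0_def)
  then have "?P s0" by (auto simp: s0_def)
  then have "?P (SOME s'. ?P s')" by (rule someI[of ?P])
  then obtain U' V' where B: "is_svd m n M U' (sing_vals M) V'"
    unfolding sing_vals_def dr dc by blast
  show ?thesis by (rule svd_unique[OF B A i])
qed

lemma svd_of_sing_vals:
  assumes M: "M \<in> carrier_mat m n"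
  shows "\<exists>U V. is_svd m n M U (sing_vals M) V"
proof -
  obtain U s V where A: "is_svd m n M U s V" using svd_exists[OF M] by blast
  have "is_svd m n M U (sing_vals M) V"
    by (rule is_svd_cong[OF A]) (rule sing_vals_eq[OF A])
  then show ?thesis by blast
qed

lemma sq_expand:
  fixes a b :: "nat \<Rightarrow> real"
  shows "(\<Sum>k\<in>A. (a k - b k)\<^sup>2) = (\<Sum>k\<in>A. a k * a k) - 2 * (\<Sum>k\<in>A. a k * b k) + (\<Sum>k\<in>A. b k * b k)"
proof -
  have "(\<Sum>k\<in>A. (a k - b k)\<^sup>2) = (\<Sum>k\<in>A. a k * a k - 2 * (a k * b k) + b k * b k)"
    by (intro sum.cong refl) (simp add: power2_eq_square algebra_simps)
  also have "\<dots> = (\<Sum>k\<in>A. a k * a k) - 2 * (\<Sum>k\<in>A. a k * b k) + (\<Sum>k\<in>A. b k * b k)"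
    by (simp add: sum.distrib sum_subtractf sum_distrib_left)
  finally show ?thesis .
qed

lemma frob_lower:
  assumes A: "is_svd m n M U1 a V1" and B: "is_svd m n Y U2 b V2"
  shows "(\<Sum>k<min m n. (a k - b k)\<^sup>2) \<le> (frob_norm (M - Y))\<^sup>2"
proof -
  note sa = svd_orth[OF A] and sb = svd_orth[OF B]
  let ?K = "min m n"
  have MM: "fip M M = (\<Sum>k<?K. a k * a k)" using same_frame[OF sa(1,2)] sa(3) by metis
  have YY: "fip Y Y = (\<Sum>k<?K. b k * b k)" using same_frame[OF sb(1,2)] sb(3) by metis
  have MY: "fip M Y \<le> (\<Sum>k<?K. a k * b k)"
    using von_neumann[OF sa(1,2) sb(1,2) sa(5) sb(5) sa(6) sb(6)] sa(3) sb(3) by metis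
  have "(frob_norm (M - Y))\<^sup>2 = fip M M - 2 * fip M Y + fip Y Y"
    by (simp add: frob_sq fip_minus[OF sa(4) sb(4)])
  then show ?thesis using MM YY MY sq_expand[of a b "{..<?K}"] by linarith
qed

lemma frob_same:
  assumes U: "orthogonal_mat m U" and V: "orthogonal_mat n V"
  shows "(frob_norm (U * rdiag m n a * transpose_mat V - U * rdiag m n b * transpose_mat V))\<^sup>2
     = (\<Sum>k<min m n. (a k - b k)\<^sup>2)"
proof -
  have Uc: "U \<in> carrier_mat m m" and Vc: "V \<in> carrier_mat n n" using U V by (auto simp: orth_carrier)
  have c: "U * rdiag m n a * transpose_mat V \<in> carrier_mat m n" "U * rdiag m n b * transpose_mat V \<in> carrier_mat m n"
    using Uc Vc by auto
  show ?thesis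
    by (simp add: frob_sq fip_minus[OF c] same_frame[OF U V] sq_expand)
qed

theorem theorem1:
  fixes m n :: nat and \<theta> p lam :: real and Y U V :: "real mat"
    and \<sigma> \<delta> :: "nat \<Rightarrow> real"
  assumes "m \<ge> 1" "n \<ge> 1"
    and "0 \<le> \<theta>" "\<theta> \<le> 1"
    and "0 < p" "p < 1"
    and "lam > 0"
    and svd: "is_svd m n Y U \<sigma> V"
    and \<delta>_feas: "(\<forall>i\<in>{trunc_rank \<theta> m n..<min m n}. 0 \<le> \<delta> i) \<and>
         (\<forall>i j. trunc_rank \<theta> m n \<le> i \<and> i \<le> j \<and> j < min m n \<longrightarrow> \<delta> j \<le> \<delta> i)"
    and \<delta>_opt: "\<forall>\<delta>'. ((\<forall>i\<in>{trunc_rank \<theta> m n..<min m n}. 0 \<le> \<delta>' i) \<and>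
         (\<forall>i j. trunc_rank \<theta> m n \<le> i \<and> i \<le> j \<and> j < min m n \<longrightarrow> \<delta>' j \<le> \<delta>' i)) \<longrightarrow>
         (\<Sum>i\<in>{trunc_rank \<theta> m n..<min m n}. lam * \<delta> i powr p + 1/2 * (\<delta> i - \<sigma> i)\<^sup>2)
           \<le> (\<Sum>i\<in>{trunc_rank \<theta> m n..<min m n}. lam * \<delta>' i powr p + 1/2 * (\<delta>' i - \<sigma> i)\<^sup>2)"
  shows "(\<forall>M \<in> carrier_mat m n.
            lam * trunc_schatten_pow \<theta> p
                 (U * rdiag m n (\<lambda>i. if i < trunc_rank \<theta> m n then \<sigma> i else \<delta> i) * transpose_mat V)
              + 1/2 * (frob_norm
                 (U * rdiag m n (\<lambda>i. if i < trunc_rank \<theta> m n then \<sigma> i else \<delta> i) * transpose_mat V - Y))\<^sup>2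
            \<le> lam * trunc_schatten_pow \<theta> p M + 1/2 * (frob_norm (M - Y))\<^sup>2)
       \<and> (\<forall>i j. i \<le> j \<and> j < min m n \<longrightarrow>
            (if j < trunc_rank \<theta> m n then \<sigma> j else \<delta> j)
              \<le> (if i < trunc_rank \<theta> m n then \<sigma> i else \<delta> i))"
proof -
  let ?r = "trunc_rank \<theta> m n"
  let ?K = "min m n"
  let ?A = "{trunc_rank \<theta> m n..<min m n}"
  let ?D = "\<lambda>i. if i < trunc_rank \<theta> m n then \<sigma> i else \<delta> i"
  let ?Mo = "U * rdiag m n ?D * transpose_mat V"
  note sv = svd_orth[OF svd]
  have oU: "orthogonal_mat m U" and oV: "orthogonal_mat n V" using sv by auto
  have Uc: "U \<in> carrier_mat m m" and Vc: "V \<in> carrier_mat n n" using oU oV by (auto simp: orth_carrier)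
  have \<sigma>0: "\<And>i. i < ?K \<Longrightarrow> 0 \<le> \<sigma> i" using sv(5) by auto
  have \<sigma>m: "\<And>i j. i \<le> j \<Longrightarrow> j < ?K \<Longrightarrow> \<sigma> j \<le> \<sigma> i" using sv(6) by auto
  have \<delta>0: "\<And>i. i \<in> ?A \<Longrightarrow> 0 \<le> \<delta> i" using \<delta>_feas by auto
  have \<delta>m: "\<And>i j. ?r \<le> i \<Longrightarrow> i \<le> j \<Longrightarrow> j < ?K \<Longrightarrow> \<delta> j \<le> \<delta> i" using \<delta>_feas by auto
  have \<delta>le: "\<forall>j\<in>?A. \<delta> j \<le> \<sigma> j"
  proof (rule ccontr)
    assume "\<not> (\<forall>j\<in>?A. \<delta> j \<le> \<sigma> j)"
    then obtain j where j: "j \<in> ?A" and jlt: "\<sigma> j < \<delta> j" by force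
    define \<delta>' where "\<delta>' = (\<lambda>i. min (\<delta> i) (\<sigma> i))"
    have feas: "(\<forall>i\<in>?A. 0 \<le> \<delta>' i) \<and> (\<forall>i j. ?r \<le> i \<and> i \<le> j \<and> j < ?K \<longrightarrow> \<delta>' j \<le> \<delta>' i)"
    proof (intro conjI allI impI ballI)
      fix i assume i: "i \<in> ?A"
      show "0 \<le> \<delta>' i" using \<delta>0[OF i] \<sigma>0[of i] i by (simp add: \<delta>'_def)
    next
      fix i j assume h: "?r \<le> i \<and> i \<le> j \<and> j < ?K"
      have "\<delta> j \<le> \<delta> i" using \<delta>m h by auto
      moreover have "\<sigma> j \<le> \<sigma> i" using \<sigma>m h by auto
      ultimately show "\<delta>' j \<le> \<delta>' i" by (auto simp: \<delta>'_def min_def)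
    qed
    have le: "(\<Sum>i\<in>?A. lam * \<delta> i powr p + 1/2 * (\<delta> i - \<sigma> i)\<^sup>2)
           \<le> (\<Sum>i\<in>?A. lam * \<delta>' i powr p + 1/2 * (\<delta>' i - \<sigma> i)\<^sup>2)"
      using \<delta>_opt feas by blast
    have tw: "\<forall>i\<in>?A. lam * \<delta>' i powr p + 1/2 * (\<delta>' i - \<sigma> i)\<^sup>2 \<le> lam * \<delta> i powr p + 1/2 * (\<delta> i - \<sigma> i)\<^sup>2"
    proof
      fix i assume i: "i \<in> ?A"
      show "lam * \<delta>' i powr p + 1/2 * (\<delta>' i - \<sigma> i)\<^sup>2 \<le> lam * \<delta> i powr p + 1/2 * (\<delta> i - \<sigma> i)\<^sup>2"
      proof (cases "\<delta> i \<le> \<sigma> i")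
        case True then show ?thesis by (simp add: \<delta>'_def)
      next
        case False
        then have d: "\<delta>' i = \<sigma> i" by (simp add: \<delta>'_def)
        have "\<sigma> i powr p \<le> \<delta> i powr p"
          by (rule powr_mono2) (use assms(5) \<sigma>0[of i] i False in auto)
        then have "lam * \<sigma> i powr p \<le> lam * \<delta> i powr p" using assms(7) by simp
        moreover have "1/2 * (\<sigma> i - \<sigma> i)\<^sup>2 = 0" by simp
        moreover have "0 \<le> 1/2 * (\<delta> i - \<sigma> i)\<^sup>2" by simp
        ultimately show ?thesis unfolding d by linarith
      qed
    qed
    have st: "lam * \<delta>' j powr p + 1/2 * (\<delta>' j - \<sigma> j)\<^sup>2 < lam * \<delta> j powr p + 1/2 * (\<delta> j - \<sigma> j)\<^sup>2"
    proof -
      have d: "\<delta>' j = \<sigma> j" using jlt by (simp add: \<delta>'_def)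
      have "\<sigma> j powr p < \<delta> j powr p"
        by (rule powr_less_mono2) (use assms(5) \<sigma>0[of j] j jlt in auto)
      then have "lam * \<sigma> j powr p < lam * \<delta> j powr p" using assms(7) by simp
      moreover have "0 \<le> 1/2 * (\<delta> j - \<sigma> j)\<^sup>2" by simp
      moreover have "1/2 * (\<sigma> j - \<sigma> j)\<^sup>2 = 0" by simp
      ultimately show ?thesis unfolding d by linarith
    qed
    have "(\<Sum>i\<in>?A. lam * \<delta>' i powr p + 1/2 * (\<delta>' i - \<sigma> i)\<^sup>2)
        < (\<Sum>i\<in>?A. lam * \<delta> i powr p + 1/2 * (\<delta> i - \<sigma> i)\<^sup>2)"
      by (rule sum_strict_mono_ex1) (use tw st j in auto)
    then show False using le by simp
  qed
  have ord: "\<forall>i j. i \<le> j \<and> j < ?K \<longrightarrow> ?D j \<le> ?D i"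
  proof (intro allI impI)
    fix i j assume h: "i \<le> j \<and> j < ?K"
    show "?D j \<le> ?D i"
    proof (cases "j < ?r")
      case True then show ?thesis using h \<sigma>m by auto
    next
      case jr: False
      show ?thesis
      proof (cases "i < ?r")
        case True
        have "\<delta> j \<le> \<sigma> j" using \<delta>le jr h by auto
        also have "\<sigma> j \<le> \<sigma> i" using \<sigma>m h by auto
        finally show ?thesis using True jr by simp
      next
        case False then show ?thesis using jr h \<delta>m by auto
      qed
    qed
  qed
  have D0: "\<forall>i<?K. 0 \<le> ?D i" using \<sigma>0 \<delta>0 by auto
  have Moc: "?Mo \<in> carrier_mat m n" using Uc Vc by auto
  have svdMo: "is_svd m n ?Mo U ?D V"
    unfolding is_svd_def using Moc oU oV D0 ord by blast
  have dMo: "dim_row ?Mo = m" "dim_col ?Mo = n" using Moc by auto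
  have tsMo: "trunc_schatten_pow \<theta> p ?Mo = (\<Sum>i\<in>?A. \<delta> i powr p)"
    unfolding trunc_schatten_pow_def Let_def dMo
    by (intro sum.cong refl) (auto simp: sing_vals_eq[OF svdMo])
  have Yeq: "Y = U * rdiag m n \<sigma> * transpose_mat V" using sv(3) .
  have "(frob_norm (?Mo - Y))\<^sup>2 = (\<Sum>k<?K. (?D k - \<sigma> k)\<^sup>2)"
    unfolding Yeq by (rule frob_same[OF oU oV])
  also have "\<dots> = (\<Sum>k\<in>?A. (?D k - \<sigma> k)\<^sup>2)"
    by (rule sum.mono_neutral_right) auto
  also have "\<dots> = (\<Sum>k\<in>?A. (\<delta> k - \<sigma> k)\<^sup>2)" by (intro sum.cong refl) auto
  finally have fMo: "(frob_norm (?Mo - Y))\<^sup>2 = (\<Sum>k\<in>?A. (\<delta> k - \<sigma> k)\<^sup>2)" .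
  have objMo: "lam * trunc_schatten_pow \<theta> p ?Mo + 1/2 * (frob_norm (?Mo - Y))\<^sup>2
      = (\<Sum>i\<in>?A. lam * \<delta> i powr p + 1/2 * (\<delta> i - \<sigma> i)\<^sup>2)"
    unfolding tsMo fMo by (simp add: sum.distrib sum_distrib_left)
  have main: "\<forall>M \<in> carrier_mat m n. lam * trunc_schatten_pow \<theta> p ?Mo + 1/2 * (frob_norm (?Mo - Y))\<^sup>2
            \<le> lam * trunc_schatten_pow \<theta> p M + 1/2 * (frob_norm (M - Y))\<^sup>2"
  proof
    fix M :: "real mat" assume Mc: "M \<in> carrier_mat m n"
    obtain U2 V2 where svdM: "is_svd m n M U2 (sing_vals M) V2" using svd_of_sing_vals[OF Mc] by blast
    let ?s = "sing_vals M"
    note sm = svd_orth[OF svdM]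
    have feas: "(\<forall>i\<in>?A. 0 \<le> ?s i) \<and> (\<forall>i j. ?r \<le> i \<and> i \<le> j \<and> j < ?K \<longrightarrow> ?s j \<le> ?s i)"
      using sm(5) sm(6) by auto
    have opt: "(\<Sum>i\<in>?A. lam * \<delta> i powr p + 1/2 * (\<delta> i - \<sigma> i)\<^sup>2)
           \<le> (\<Sum>i\<in>?A. lam * ?s i powr p + 1/2 * (?s i - \<sigma> i)\<^sup>2)"
      using \<delta>_opt feas by blast
    have dM: "dim_row M = m" "dim_col M = n" using Mc by auto
    have tsM: "trunc_schatten_pow \<theta> p M = (\<Sum>i\<in>?A. ?s i powr p)"
      unfolding trunc_schatten_pow_def Let_def dM ..
    have low: "(\<Sum>k<?K. (?s k - \<sigma> k)\<^sup>2) \<le> (frob_norm (M - Y))\<^sup>2"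
      by (rule frob_lower[OF svdM svd])
    have "(\<Sum>k\<in>?A. (?s k - \<sigma> k)\<^sup>2) \<le> (\<Sum>k<?K. (?s k - \<sigma> k)\<^sup>2)"
      by (rule sum_mono2) auto
    with low have low2: "(\<Sum>k\<in>?A. (?s k - \<sigma> k)\<^sup>2) \<le> (frob_norm (M - Y))\<^sup>2" by linarith
    have split: "(\<Sum>i\<in>?A. lam * ?s i powr p + 1/2 * (?s i - \<sigma> i)\<^sup>2)
        = lam * (\<Sum>i\<in>?A. ?s i powr p) + 1/2 * (\<Sum>k\<in>?A. (?s k - \<sigma> k)\<^sup>2)"
      by (simp add: sum.distrib sum_distrib_left)
    show "lam * trunc_schatten_pow \<theta> p ?Mo + 1/2 * (frob_norm (?Mo - Y))\<^sup>2
            \<le> lam * trunc_schatten_pow \<theta> p M + 1/2 * (frob_norm (M - Y))\<^sup>2"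
      unfolding objMo tsM using opt split low2 by linarith
  qed
  show ?thesis using main ord by blast
qed

end
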